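(* Assume that the function $\varphi$ described in the context satisfies Conditions (C1), (C2), (C3), (C4). Then the functional $\|u\|_{\mathcal L(\Omega)}:=f(u)$ is a norm on $\mathcal L(\Omega)$, and $\mathcal L(\Omega)$ equipped with this norm is a Banach space. Moreover, the embeddings $$L_{p_+}(\Omega)\cap L_{p_-}(\Omega)\subseteq \mathcal L(\Omega)\subseteq L_{p_-}(\Omega)$$ hold and are continuous (where $L_{p_+}(\Omega)\cap L_{p_-}(\Omega)$ carries its natural intersection norm).
   Context: Let $d\ge 1$ and let $\Omega\subseteq\mathbb R^d$ be a domain (open set, bounded or unbounded, possibly $\Omega=\mathbb R^d$). Functions are complex-valued. Let $a\in L_1(\mathbb R^d)$, $a\ge 0$, and suppose there is a non-empty ball $B_0$ centered at $0$ with $a(z)\ge c_0>0$ for a.e. $z\in B_0$. If $\Omega$ is not connected and $\Omega_1,\Omega_2,\dots$ are its connected components, assume $\operatorname{dist}(\Omega_i,\Omega_{i+1})<\operatorname{diam}B_0$ for all $i$. A real function $r$ on $[0,\infty)$ is almost increasing (resp. almost decreasing) with constant $\beta\ge1$ if $r(s)\le\beta r(t)$ (resp. $\beta r(s)\ge r(t)$) for all $0\le s\le t$. Let $\varphi:[0,\infty)\times\Omega\times\Omega\to[0,\infty)$. Conditions: (C1) for each $u\in L_{1,loc}(\Omega)$ the function $(x,y)\mapsto\varphi(|u(x)-u(y)|,x,y)$ is measurable on $\Omega\times\Omega$; (C2) for every $\varepsilon>0$ there is $\delta\in(0,1)$ such that $\varphi(\frac{s+t}{2},x,y)\le(1-\delta)\frac{\varphi(s,x,y)+\varphi(t,x,y)}{2}$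 for a.e. $(x,y)$ and all $s,t>0$ with $|s-t|\ge\varepsilon\max\{s,t\}$; (C3) there are constants $1<p_-\le p_+$ and $\beta\ge1$ such that for a.e. $(x,y)$ the function $t\mapsto\varphi(t,x,y)/t^{p_-}$ is almost increasing with constant $\beta$ and $t\mapsto\varphi(t,x,y)/t^{p_+}$ is almost decreasing with constant $\beta$; (C4) for a.e. $(x,y)$: $c_1^{-1}\le\varphi(1,x,y)\le c_1$ with a constant $c_1>0$, $\varphi(0,x,y)=0$, and $\varphi(t,x,y)>0$ for $t>0$. Define for $u\in L_{1,loc}(\Omega)$: $F(u)=\int_{\Omega\times\Omega}\varphi(|u(x)-u(y)|,x,y)\,a(x-y)\,dx\,dy\in[0,+\infty]$, $|u|_{p,\Omega}=\inf\{\lambda>0: F(u/\lambda)\le1\}$, $f(u)=|u|_{p,\Omega}+\|u\|_{L_{p_-}(\Omega)}$, and $\mathcal L(\Omega)=\{u\in L_{p_-,loc}(\Omega): f(u)<+\infty\}$. *)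

theory Defs
  imports "HOL-Analysis.Analysis"
begin

text \<open>Functions u are complex-valued on the ambient space 'a (= R^d); only their
values on the domain Omega matter. Lebesgue measure is used throughout.\<close>

definition Lp_integral :: "'a::euclidean_space set \<Rightarrow> real \<Rightarrow> ('a \<Rightarrow> complex) \<Rightarrow> ennreal" where
  "Lp_integral S p u = (\<integral>\<^sup>+ x \<in> S. ennreal (cmod (u x) powr p) \<partial>lebesgue)"

definition Lp_norm :: "'a::euclidean_space set \<Rightarrow> real \<Rightarrow> ('a \<Rightarrow> complex) \<Rightarrow> ennreal" where
  "Lp_norm S p u =
     (if Lp_integral S p u = top then top else ennreal (enn2real (Lp_integral S p u) powr (1 / p)))"

definition Lp_space :: "'a::euclidean_space set \<Rightarrow> real \<Rightarrow> ('a \<Rightarrow> complex) set" where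
  "Lp_space S p = {u. u \<in> borel_measurable (lebesgue_on S) \<and> Lp_norm S p u < top}"

definition Lp_loc_space :: "'a::euclidean_space set \<Rightarrow> real \<Rightarrow> ('a \<Rightarrow> complex) set" where
  "Lp_loc_space S p = {u. u \<in> borel_measurable (lebesgue_on S) \<and>
      (\<forall>K. compact K \<and> K \<subseteq> S \<longrightarrow> Lp_integral K p u < top)}"

definition Ffun :: "'a::euclidean_space set \<Rightarrow> (real \<Rightarrow> 'a \<Rightarrow> 'a \<Rightarrow> real) \<Rightarrow> ('a \<Rightarrow> real)
    \<Rightarrow> ('a \<Rightarrow> complex) \<Rightarrow> ennreal" where
  "Ffun S \<phi> a u = (\<integral>\<^sup>+ z \<in> S \<times> S.
      ennreal (\<phi> (cmod (u (fst z) - u (snd z))) (fst z) (snd z) * a (fst z - snd z)) \<partial>lebesgue)"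

definition seminorm_p :: "'a::euclidean_space set \<Rightarrow> (real \<Rightarrow> 'a \<Rightarrow> 'a \<Rightarrow> real) \<Rightarrow> ('a \<Rightarrow> real)
    \<Rightarrow> ('a \<Rightarrow> complex) \<Rightarrow> ennreal" where
  "seminorm_p S \<phi> a u =
     Inf (ennreal ` {lam::real. lam > 0 \<and> Ffun S \<phi> a (\<lambda>x. u x / complex_of_real lam) \<le> 1})"

definition fnorm :: "'a::euclidean_space set \<Rightarrow> (real \<Rightarrow> 'a \<Rightarrow> 'a \<Rightarrow> real) \<Rightarrow> ('a \<Rightarrow> real)
    \<Rightarrow> real \<Rightarrow> ('a \<Rightarrow> complex) \<Rightarrow> ennreal" where
  "fnorm S \<phi> a pm u = seminorm_p S \<phi> a u + Lp_norm S pm u"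

definition Lspace :: "'a::euclidean_space set \<Rightarrow> (real \<Rightarrow> 'a \<Rightarrow> 'a \<Rightarrow> real) \<Rightarrow> ('a \<Rightarrow> real)
    \<Rightarrow> real \<Rightarrow> ('a \<Rightarrow> complex) set" where
  "Lspace S \<phi> a pm = {u \<in> Lp_loc_space S pm. fnorm S \<phi> a pm u < top}"

definition cond_C1 :: "'a::euclidean_space set \<Rightarrow> (real \<Rightarrow> 'a \<Rightarrow> 'a \<Rightarrow> real) \<Rightarrow> bool" where
  "cond_C1 S \<phi> \<longleftrightarrow> (\<forall>u \<in> Lp_loc_space S 1.
     (\<lambda>z. \<phi> (cmod (u (fst z) - u (snd z))) (fst z) (snd z)) \<in> borel_measurable (lebesgue_on (S \<times> S)))"

definition cond_C2 :: "'a::euclidean_space set \<Rightarrow> (real \<Rightarrow> 'a \<Rightarrow> 'a \<Rightarrow> real) \<Rightarrow> bool" where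
  "cond_C2 S \<phi> \<longleftrightarrow> (\<forall>\<epsilon>>0. \<exists>\<delta>. 0 < \<delta> \<and> \<delta> < 1 \<and>
     (AE z in lebesgue_on (S \<times> S). \<forall>s t. s > 0 \<and> t > 0 \<and> \<bar>s - t\<bar> \<ge> \<epsilon> * max s t \<longrightarrow>
        \<phi> ((s + t) / 2) (fst z) (snd z) \<le> (1 - \<delta>) * ((\<phi> s (fst z) (snd z) + \<phi> t (fst z) (snd z)) / 2)))"

definition cond_C3 :: "'a::euclidean_space set \<Rightarrow> (real \<Rightarrow> 'a \<Rightarrow> 'a \<Rightarrow> real) \<Rightarrow> real \<Rightarrow> real \<Rightarrow> real \<Rightarrow> bool" where
  "cond_C3 S \<phi> pm pp \<beta> \<longleftrightarrow> 1 < pm \<and> pm \<le> pp \<and> \<beta> \<ge> 1 \<and>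
     (AE z in lebesgue_on (S \<times> S).
        (\<forall>s t. 0 < s \<and> s \<le> t \<longrightarrow>
           \<phi> s (fst z) (snd z) / s powr pm \<le> \<beta> * (\<phi> t (fst z) (snd z) / t powr pm)) \<and>
        (\<forall>s t. 0 < s \<and> s \<le> t \<longrightarrow>
           \<beta> * (\<phi> s (fst z) (snd z) / s powr pp) \<ge> \<phi> t (fst z) (snd z) / t powr pp))"

definition cond_C4 :: "'a::euclidean_space set \<Rightarrow> (real \<Rightarrow> 'a \<Rightarrow> 'a \<Rightarrow> real) \<Rightarrow> real \<Rightarrow> bool" where
  "cond_C4 S \<phi> c1 \<longleftrightarrow> c1 > 0 \<and>
     (AE z in lebesgue_on (S \<times> S). 1 / c1 \<le> \<phi> 1 (fst z) (snd z) \<and> \<phi> 1 (fst z) (snd z) \<le> c1 \<and>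
        \<phi> 0 (fst z) (snd z) = 0 \<and> (\<forall>t>0. \<phi> t (fst z) (snd z) > 0))"

end

theory Submission
  imports Defs
begin

definition cvx :: "(real \<Rightarrow> real) \<Rightarrow> bool" where
  "cvx g \<longleftrightarrow> (\<forall>x\<ge>0. \<forall>y\<ge>0. \<forall>\<theta>. 0 \<le> \<theta> \<and> \<theta> \<le> 1 \<longrightarrow>
      g ((1-\<theta>)*x + \<theta>*y) \<le> (1-\<theta>)*g x + \<theta> * g y)"

lemma dyadic_step:
  fixes g :: "real \<Rightarrow> real"
  assumes mid: "\<And>s t. s>0 \<Longrightarrow> t>0 \<Longrightarrow> g((s+t)/2) \<le> (g s + g t)/2"
    and z: "z>0" and w: "w>0"
  shows "g ((1 - (1/2)^n)*z + (1/2)^n * w) \<le> (1-(1/2)^n) * g z + (1/2)^n * g w"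
proof (induction n)
  case 0
  then show ?case by simp
next
  case (Suc n)
  define q where "q = (1/2::real)^n"
  have q: "0 < q" "q \<le> 1" unfolding q_def by (auto simp: power_le_one)
  define p where "p = (1 - q)*z + q * w"
  have p: "p > 0" unfolding p_def using q z w
    by (smt (verit, best) mult_nonneg_nonneg mult_pos_pos)
  have e: "(1 - (1/2)^Suc n)*z + (1/2)^Suc n * w = (z + p)/2"
    unfolding p_def q_def by (simp add: field_simps)
  have "g ((z + p)/2) \<le> (g z + g p)/2" using mid[OF z p] .
  also have "\<dots> \<le> (g z + ((1-q) * g z + q * g w))/2"
    using Suc.IH unfolding p_def q_def by simp
  also have "\<dots> = (1-(1/2)^Suc n) * g z + (1/2)^Suc n * g w"
    unfolding q_def by (simp add: field_simps)
  finally show ?case unfolding e .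
qed

lemma BD_cont:
  fixes g :: "real \<Rightarrow> real"
  assumes mid: "\<And>s t. s>0 \<Longrightarrow> t>0 \<Longrightarrow> g((s+t)/2) \<le> (g s + g t)/2"
    and z: "z>0" and bnd: "\<And>t. 0 < t \<Longrightarrow> t \<le> 2*z \<Longrightarrow> g t \<le> M"
  shows "isCont g z"
  unfolding isCont_def LIM_eq
proof (intro allI impI)
  fix r :: real assume r: "r > 0"
  define C where "C = M - g z"
  have C: "C \<ge> 0" using bnd[of z] z unfolding C_def by simp
  obtain n where n: "(1/2::real)^n < r / (C+1)"
    using real_arch_pow_inv[of "r/(C+1)" "1/2::real"] r C by auto
  define q where "q = (1/2::real)^n"
  have q: "0 < q" "q \<le> 1" unfolding q_def by (auto simp: power_le_one)
  have qC: "q * C < r"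
  proof -
    have "q * (C+1) < r" using n C unfolding q_def by (simp add: field_simps)
    then show ?thesis using q by (smt (verit) mult_left_mono)
  qed
  have key: "g x \<le> g z + q * C" if "\<bar>x - z\<bar> < q * (z/2)" for x
  proof -
    define t where "t = (x - z)/q"
    define w where "w = z + t"
    have "\<bar>t\<bar> < z/2" using that q unfolding t_def by (simp add: field_simps abs_divide)
    then have w1: "0 < w" "w \<le> 2*z" unfolding w_def using z by (auto simp: abs_less_iff)
    have xe: "x = (1-q)*z + q*w" unfolding w_def t_def using q by (simp add: field_simps)
    have "g x \<le> (1-q)*g z + q * g w" using dyadic_step[OF mid z w1(1), of n] xe q_def by simp
    also have "\<dots> \<le> (1-q)*g z + q * M" using bnd[OF w1] q by simp
    also have "\<dots> = g z + q * C" unfolding C_def by (simp add: algebra_simps)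
    finally show ?thesis .
  qed
  show "\<exists>s>0. \<forall>x. x \<noteq> z \<and> norm (x - z) < s \<longrightarrow> norm (g x - g z) < r"
  proof (intro exI[of _ "q*(z/2)"] conjI allI impI)
    show "q*(z/2) > 0" using q z by simp
    fix x assume x: "x \<noteq> z \<and> norm (x - z) < q*(z/2)"
    have "q*(z/2) \<le> z/2" using q z by simp
    then have xa: "\<bar>x - z\<bar> < z/2" using x by simp
    have xpos: "x > 0" using xa z by arith
    have x'pos: "2*z - x > 0" using xa z by arith
    have up: "g x \<le> g z + q*C" using key x by simp
    have up': "g (2*z - x) \<le> g z + q*C" using key[of "2*z - x"] x by (simp add: abs_minus_commute)
    have "g z \<le> (g x + g (2*z - x))/2" using mid[OF xpos x'pos] by simp
    then have "g x \<ge> g z - q*C" using up' by simp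
    then show "norm (g x - g z) < r" using up qC by simp
  qed
qed

lemma BD_main:
  fixes g :: "real \<Rightarrow> real"
  assumes mid: "\<And>s t. s>0 \<Longrightarrow> t>0 \<Longrightarrow> g((s+t)/2) \<le> (g s + g t)/2"
    and g0: "g 0 = 0"
    and bnd: "\<And>T. T>0 \<Longrightarrow> \<exists>M. \<forall>t. 0<t \<and> t\<le>T \<longrightarrow> g t \<le> M"
    and lim0: "(g \<longlongrightarrow> 0) (at_right 0)"
  shows "continuous_on {0..} g" and "cvx g"
proof -
  have ic: "isCont g z" if "z > 0" for z
  proof -
    obtain M where "\<forall>t. 0<t \<and> t\<le>2*z \<longrightarrow> g t \<le> M" using bnd[of "2*z"] \<open>z > 0\<close> by auto
    then show ?thesis using BD_cont[OF mid \<open>z > 0\<close>, of M] by auto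
  qed
  have at0: "at 0 within {0 ..} = at_right (0::real)"
    by (auto simp: filter_eq_iff eventually_at_filter le_less)
  show cont: "continuous_on {0..} g"
    unfolding continuous_on_eq_continuous_within
  proof
    fix x :: real assume "x \<in> {0..}"
    then consider "x = 0" | "x > 0" by force
    then show "continuous (at x within {0..}) g"
    proof cases
      case 1
      then show ?thesis unfolding continuous_within using lim0 g0 at0 by simp
    next
      case 2
      then show ?thesis using ic continuous_at_imp_continuous_at_within by blast
    qed
  qed
  have mid0: "g((s+t)/2) \<le> (g s + g t)/2" if "s \<ge> 0" "t \<ge> 0" for s t
  proof -
    have *: "g(t/2) \<le> g t / 2" if "t > 0" for t
    proof (rule tendsto_le[of "at_right 0" "\<lambda>s. (g s + g t)/2" _ "\<lambda>s. g((s+t)/2)"])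
      show "at_right (0::real) \<noteq> bot" by simp
      show "((\<lambda>s. (g s + g t) / 2) \<longlongrightarrow> g t / 2) (at_right 0)"
        using lim0 by (auto intro!: tendsto_eq_intros)
      have "((\<lambda>s. (s+t)/2) \<longlongrightarrow> (0+t)/2) (at_right 0)"
        by (intro tendsto_intros) simp
      moreover have "isCont g (t/2)" using ic that by simp
      ultimately show "((\<lambda>s. g ((s + t) / 2)) \<longlongrightarrow> g (t / 2)) (at_right 0)"
        using isCont_tendsto_compose[of "t/2" g] by fastforce
      show "\<forall>\<^sub>F s in at_right 0. g ((s + t) / 2) \<le> (g s + g t) / 2"
        using eventually_at_right_less[of 0] mid[OF _ that]
        by (auto elim!: eventually_mono)
    qed
    consider "s = 0" "t = 0" | "s = 0" "t > 0" | "s > 0" "t = 0" | "s > 0" "t > 0"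
      using \<open>s \<ge> 0\<close> \<open>t \<ge> 0\<close> by force
    then show ?thesis
    proof cases
      case 1 then show ?thesis using g0 by simp
    next
      case 2 then show ?thesis using *[of t] g0 by simp
    next
      case 3 then show ?thesis using *[of s] g0 by simp
    next
      case 4 then show ?thesis using mid by simp
    qed
  qed
  have conv: "g ((1-\<theta>)*x + \<theta>*y) \<le> (1-\<theta>)*g x + \<theta> * g y"
    if xy: "0 \<le> x" "x < y" and th: "0 \<le> \<theta>" "\<theta> \<le> 1" for x y \<theta>
  proof -
    define k where "k = (g y - g x)/(y - x)"
    define h where "h t = g t - (g x + k*(t - x))" for t
    have hc: "continuous_on {x..y} h" unfolding h_def
      using continuous_on_subset[OF cont, of "{x..y}"] xy
      by (auto intro!: continuous_intros)
    have hx: "h x = 0" and hy: "h y = 0" unfolding h_def k_def using xy by auto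
    have hmid: "h ((s+t)/2) \<le> (h s + h t)/2" if "s \<in> {x..y}" "t \<in> {x..y}" for s t
    proof -
      have "g ((s+t)/2) \<le> (g s + g t)/2" using mid0 that xy by auto
      then show ?thesis unfolding h_def by (simp add: field_simps)
    qed
    have hle: "h p \<le> 0" if p: "p \<in> {x..y}" for p
    proof (rule ccontr)
      assume "\<not> h p \<le> 0"
      obtain m where m: "m \<in> {x..y}" "\<forall>t\<in>{x..y}. h t \<le> h m"
        using continuous_attains_sup[OF compact_Icc _ hc] xy by auto
      define c where "c = h m"
      have c: "c > 0" using m p \<open>\<not> h p \<le> 0\<close> unfolding c_def by force
      define Z where "Z = {t \<in> {x..y}. h t = c}"
      have Zc: "closed Z" unfolding Z_def
        by (rule continuous_closed_preimage_constant[OF hc closed_atLeastAtMost])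
      have Zne: "Z \<noteq> {}" using m unfolding Z_def c_def by auto
      have Zb: "bdd_below Z" unfolding Z_def by (auto intro!: bdd_belowI[of _ x])
      define z where "z = Inf Z"
      have zZ: "z \<in> Z" unfolding z_def using closed_contains_Inf[OF Zne Zb Zc] .
      have zx: "z \<noteq> x" "z \<noteq> y" using zZ hx hy c unfolding Z_def by auto
      then have zin: "x < z" "z < y" using zZ unfolding Z_def by auto
      define d where "d = min (z - x) (y - z)"
      have d: "d > 0" "z - d \<in> {x..y}" "z + d \<in> {x..y}" using zin unfolding d_def by auto
      have "z - d \<notin> Z"
      proof
        assume "z - d \<in> Z"
        then have "z \<le> z - d" unfolding z_def using cInf_lower[OF _ Zb] by blast
        then show False using d by simp
      qed
      then have h1: "h (z - d) < c" using m d unfolding Z_def c_def by force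
      have h2: "h (z + d) \<le> c" using m d unfolding c_def by auto
      have "h z \<le> (h (z-d) + h (z+d))/2" using hmid[OF d(2) d(3)] by simp
      then have "h z < c" using h1 h2 by simp
      then show False using zZ unfolding Z_def by simp
    qed
    define p where "p = (1-\<theta>)*x + \<theta>*y"
    have pe: "p = x + \<theta>*(y-x)" unfolding p_def by (simp add: algebra_simps)
    have "\<theta>*(y-x) \<le> y - x" using mult_left_le_one_le[of "y-x" \<theta>] xy th by simp
    moreover have "0 \<le> \<theta>*(y-x)" using xy th by simp
    ultimately have "p \<in> {x..y}" unfolding pe by simp
    then have "h p \<le> 0" by (rule hle)
    moreover have "p - x = \<theta> * (y - x)" unfolding p_def by (simp add: algebra_simps)
    ultimately have "g p \<le> g x + k * (\<theta> * (y - x))" unfolding h_def by simp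
    also have "k * (\<theta> * (y - x)) = \<theta> * (g y - g x)" unfolding k_def using xy by simp
    finally show ?thesis unfolding p_def by (simp add: algebra_simps)
  qed
  show "cvx g"
    unfolding cvx_def
  proof (intro allI impI)
    fix x y \<theta> :: real assume a: "0 \<le> x" "0 \<le> y" "0 \<le> \<theta> \<and> \<theta> \<le> 1"
    consider "x < y" | "x = y" | "y < x" by force
    then show "g ((1 - \<theta>) * x + \<theta> * y) \<le> (1 - \<theta>) * g x + \<theta> * g y"
    proof cases
      case 1 then show ?thesis using conv a by simp
    next
      case 2 then show ?thesis by (simp add: algebra_simps)
    next
      case 3
      have "g ((1-(1-\<theta>))*y + (1-\<theta>)*x) \<le> (1-(1-\<theta>))*g y + (1-\<theta>) * g x"
        using conv[OF a(2) 3, of "1-\<theta>"] a by simp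
      then show ?thesis by (simp add: algebra_simps)
    qed
  qed
qed

definition goodpsi :: "'z measure \<Rightarrow> (real \<Rightarrow> 'z \<Rightarrow> real) \<Rightarrow> bool" where
  "goodpsi M \<psi> \<longleftrightarrow> (AE z in M. \<psi> 0 z = 0 \<and> (\<forall>t\<ge>0. 0 \<le> \<psi> t z) \<and> cvx (\<lambda>t. \<psi> t z)
      \<and> continuous_on {0..} (\<lambda>t. \<psi> t z))"

definition Modf :: "'z measure \<Rightarrow> (real \<Rightarrow> 'z \<Rightarrow> real) \<Rightarrow> ('z \<Rightarrow> real) \<Rightarrow> ennreal" where
  "Modf M \<psi> D = (\<integral>\<^sup>+ z. ennreal (\<psi> (D z) z) \<partial>M)"

definition Lux :: "'z measure \<Rightarrow> (real \<Rightarrow> 'z \<Rightarrow> real) \<Rightarrow> ('z \<Rightarrow> real) \<Rightarrow> ennreal" where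
  "Lux M \<psi> D = Inf (ennreal ` {l. l > 0 \<and> Modf M \<psi> (\<lambda>z. D z / l) \<le> 1})"

lemma cvx_mono:
  assumes "cvx g" "g 0 = 0" "\<forall>t\<ge>0. g t \<ge> 0" "0 \<le> s" "s \<le> t"
  shows "g s \<le> g t"
proof (cases "t = 0")
  case True then show ?thesis using assms by simp
next
  case False
  then have t: "t > 0" using assms by simp
  define th where "th = s / t"
  have th: "0 \<le> th" "th \<le> 1" unfolding th_def using assms t by auto
  have "g ((1-th)*0 + th*t) \<le> (1-th)*g 0 + th * g t"
    using assms(1) th t unfolding cvx_def by (meson less_imp_le order_refl)
  moreover have "(1-th)*0 + th*t = s" unfolding th_def using t by simp
  ultimately have "g s \<le> th * g t" using assms by simp
  also have "\<dots> \<le> g t" using th assms t mult_left_le_one_le[of "g t" th] by simp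
  finally show ?thesis .
qed

lemma goodpsi_mono:
  assumes "goodpsi M \<psi>"
  shows "AE z in M. \<forall>s t. 0 \<le> s \<and> s \<le> t \<longrightarrow> \<psi> s z \<le> \<psi> t z"
  using assms unfolding goodpsi_def
  by (rule eventually_mono) (metis cvx_mono)

lemma mod_mono_AE:
  assumes "goodpsi M \<psi>" "AE z in M. 0 \<le> D z \<and> D z \<le> D' z"
  shows "Modf M \<psi> D \<le> Modf M \<psi> D'"
  unfolding Modf_def
proof (rule nn_integral_mono_AE)
  show "AE z in M. ennreal (\<psi> (D z) z) \<le> ennreal (\<psi> (D' z) z)"
    using goodpsi_mono[OF assms(1)] assms(2) by eventually_elim (auto intro: ennreal_leI)
qed

lemma lux_le:
  assumes "l > 0" "Modf M \<psi> (\<lambda>z. D z / l) \<le> 1"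
  shows "Lux M \<psi> D \<le> ennreal l"
  unfolding Lux_def using assms by (intro Inf_lower) auto

lemma lux_le_eps:
  assumes "r \<ge> 0" "\<And>e. e > 0 \<Longrightarrow> Modf M \<psi> (\<lambda>z. D z / (r + e)) \<le> 1"
  shows "Lux M \<psi> D \<le> ennreal r"
proof (rule ennreal_le_epsilon)
  fix e :: real assume "e > 0"
  then have "Lux M \<psi> D \<le> ennreal (r + e)" using assms by (intro lux_le) auto
  then show "Lux M \<psi> D \<le> ennreal r + ennreal e" using assms \<open>e>0\<close> by (simp add: ennreal_plus)
qed

lemma lux_lt:
  assumes g: "goodpsi M \<psi>" and D: "\<And>z. D z \<ge> 0" and lt: "Lux M \<psi> D < ennreal e"
  shows "Modf M \<psi> (\<lambda>z. D z / e) \<le> 1"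
proof -
  obtain l where l: "l > 0" "Modf M \<psi> (\<lambda>z. D z / l) \<le> 1" "ennreal l < ennreal e"
    using lt unfolding Lux_def Inf_less_iff by auto
  then have le: "l < e" using ennreal_less_iff[of l e] by simp
  have "Modf M \<psi> (\<lambda>z. D z / e) \<le> Modf M \<psi> (\<lambda>z. D z / l)"
    using D l le by (intro mod_mono_AE[OF g] AE_I2) (auto intro: divide_left_mono)
  then show ?thesis using l by simp
qed

lemma lux_cong_AE:
  assumes "AE z in M. D z = D' z"
  shows "Lux M \<psi> D = Lux M \<psi> D'"
proof -
  have "Modf M \<psi> (\<lambda>z. D z / l) = Modf M \<psi> (\<lambda>z. D' z / l)" for l
    unfolding Modf_def using assms by (intro nn_integral_cong_AE) (auto elim!: eventually_mono)
  then show ?thesis unfolding Lux_def by simp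
qed

lemma lux_zero:
  assumes g: "goodpsi M \<psi>" and "AE z in M. D z = 0"
  shows "Lux M \<psi> D = 0"
proof -
  have "Lux M \<psi> D \<le> ennreal 0"
  proof (rule lux_le_eps)
    fix e :: real assume "e > 0"
    have "Modf M \<psi> (\<lambda>z. D z / (0 + e)) = (\<integral>\<^sup>+z. 0 \<partial>M)"
    proof -
      have "AE z in M. ennreal (\<psi> (D z / (0 + e)) z) = 0"
        using assms(2) g[unfolded goodpsi_def] by eventually_elim auto
      then show ?thesis unfolding Modf_def by (rule nn_integral_cong_AE)
    qed
    then show "Modf M \<psi> (\<lambda>z. D z / (0 + e)) \<le> 1" by simp
  qed simp
  then show ?thesis by simp
qed

lemma lux_scale_le:
  assumes g: "goodpsi M \<psi>" and D: "\<And>z. D z \<ge> 0" and c: "c > 0"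
  shows "Lux M \<psi> (\<lambda>z. c * D z) \<le> ennreal c * Lux M \<psi> D"
proof (cases "Lux M \<psi> D = top")
  case True then show ?thesis using c by (simp add: ennreal_mult_top)
next
  case False
  then obtain r where r: "Lux M \<psi> D = ennreal r" "r \<ge> 0" by (cases "Lux M \<psi> D") auto
  have "Lux M \<psi> (\<lambda>z. c * D z) \<le> ennreal (c * r)"
  proof (rule lux_le_eps)
    show "0 \<le> c * r" using c r by simp
    fix e :: real assume e: "e > 0"
    have "Lux M \<psi> D < ennreal (r + e / c)" using r e c by (simp add: ennreal_less_iff)
    then have "Modf M \<psi> (\<lambda>z. D z / (r + e/c)) \<le> 1" by (rule lux_lt[OF g D])
    moreover have "(\<lambda>z. c * D z / (c * r + e)) = (\<lambda>z. D z / (r + e/c))"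
      using c by (auto simp: field_simps)
    ultimately show "Modf M \<psi> (\<lambda>z. c * D z / (c * r + e)) \<le> 1" by simp
  qed
  then show ?thesis using r c by (simp add: ennreal_mult)
qed

lemma lux_scale:
  assumes g: "goodpsi M \<psi>" and D: "\<And>z. D z \<ge> 0" and c: "c > 0"
  shows "Lux M \<psi> (\<lambda>z. c * D z) = ennreal c * Lux M \<psi> D"
proof (rule antisym)
  show "Lux M \<psi> (\<lambda>z. c * D z) \<le> ennreal c * Lux M \<psi> D" by (rule lux_scale_le[OF assms])
  have "Lux M \<psi> (\<lambda>z. (1/c) * (c * D z)) \<le> ennreal (1/c) * Lux M \<psi> (\<lambda>z. c * D z)"
    using D c by (intro lux_scale_le[OF g]) auto
  then have "Lux M \<psi> D \<le> ennreal (1/c) * Lux M \<psi> (\<lambda>z. c * D z)" using c by simp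
  then have "ennreal c * Lux M \<psi> D \<le> ennreal c * (ennreal (1/c) * Lux M \<psi> (\<lambda>z. c * D z))"
    by (rule mult_left_mono) simp
  also have "\<dots> = Lux M \<psi> (\<lambda>z. c * D z)"
    using c by (simp add: mult.assoc[symmetric] ennreal_mult[symmetric])
  finally show "ennreal c * Lux M \<psi> D \<le> Lux M \<psi> (\<lambda>z. c * D z)" .
qed

lemma lux_triangle:
  assumes g: "goodpsi M \<psi>" and D1: "\<And>z. D1 z \<ge> 0" and D2: "\<And>z. D2 z \<ge> 0"
    and D: "AE z in M. 0 \<le> D z \<and> D z \<le> D1 z + D2 z"
    and m1: "\<And>l. l > 0 \<Longrightarrow> (\<lambda>z. \<psi> (D1 z / l) z) \<in> borel_measurable M"
    and m2: "\<And>l. l > 0 \<Longrightarrow> (\<lambda>z. \<psi> (D2 z / l) z) \<in> borel_measurable M"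
  shows "Lux M \<psi> D \<le> Lux M \<psi> D1 + Lux M \<psi> D2"
proof (cases "Lux M \<psi> D1 = top \<or> Lux M \<psi> D2 = top")
  case True then show ?thesis by auto
next
  case False
  then obtain r1 r2 where r: "Lux M \<psi> D1 = ennreal r1" "r1 \<ge> 0" "Lux M \<psi> D2 = ennreal r2" "r2 \<ge> 0"
    by (metis ennreal_cases)
  have "Lux M \<psi> D \<le> ennreal (r1 + r2)"
  proof (rule lux_le_eps)
    show "0 \<le> r1 + r2" using r by simp
    fix e :: real assume e: "e > 0"
    define l1 where "l1 = r1 + e/2"
    define l2 where "l2 = r2 + e/2"
    have l: "l1 > 0" "l2 > 0" "l1 + l2 = r1 + r2 + e" unfolding l1_def l2_def using r e by auto
    have M1: "Modf M \<psi> (\<lambda>z. D1 z / l1) \<le> 1"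
      using r e by (intro lux_lt[OF g D1]) (simp add: ennreal_less_iff l1_def)
    have M2: "Modf M \<psi> (\<lambda>z. D2 z / l2) \<le> 1"
      using r e by (intro lux_lt[OF g D2]) (simp add: ennreal_less_iff l2_def)
    define c1 where "c1 = l1 / (l1 + l2)"
    define c2 where "c2 = l2 / (l1 + l2)"
    have c: "c1 \<ge> 0" "c2 \<ge> 0" "c1 + c2 = 1" unfolding c1_def c2_def using l(1,2)
      by (auto simp: add_divide_distrib[symmetric])
    have pt: "AE z in M. ennreal (\<psi> (D z / (l1+l2)) z) \<le>
        ennreal c1 * ennreal (\<psi> (D1 z / l1) z) + ennreal c2 * ennreal (\<psi> (D2 z / l2) z)"
      using D g goodpsi_mono[OF g] unfolding goodpsi_def
    proof eventually_elim
      case (elim z)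
      have a: "D1 z / l1 \<ge> 0" "D2 z / l2 \<ge> 0" using D1 D2 l by auto
      have "\<psi> (D z / (l1+l2)) z \<le> \<psi> ((1 - c2) * (D1 z / l1) + c2 * (D2 z / l2)) z"
      proof -
        have "1 - c2 = c1" using c by simp
        then have "(1 - c2) * (D1 z / l1) + c2 * (D2 z / l2) = c1 * (D1 z / l1) + c2 * (D2 z / l2)"
          by simp
        also have "\<dots> = D1 z / (l1 + l2) + D2 z / (l1 + l2)"
          using l(1,2) unfolding c1_def c2_def by simp
        also have "\<dots> = (D1 z + D2 z) / (l1 + l2)" by (simp add: add_divide_distrib)
        finally have "(1 - c2) * (D1 z / l1) + c2 * (D2 z / l2) = (D1 z + D2 z) / (l1 + l2)" .
        moreover have "D z / (l1+l2) \<le> (D1 z + D2 z) / (l1 + l2)"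
          using elim l by (intro divide_right_mono) auto
        moreover have "0 \<le> D z / (l1+l2)" using elim l by simp
        ultimately show ?thesis using elim by metis
      qed
      also have "\<dots> \<le> (1 - c2) * \<psi> (D1 z / l1) z + c2 * \<psi> (D2 z / l2) z"
      proof -
        have cv: "cvx (\<lambda>t. \<psi> t z)" using elim by blast
        have "c2 \<le> 1" using c by simp
        then show ?thesis using cv[unfolded cvx_def, rule_format, of "D1 z / l1" "D2 z / l2" c2] a c
          by blast
      qed
      also have "1 - c2 = c1" using c by simp
      finally have "\<psi> (D z / (l1+l2)) z \<le> c1 * \<psi> (D1 z / l1) z + c2 * \<psi> (D2 z / l2) z" .
      then have "ennreal (\<psi> (D z / (l1+l2)) z) \<le> ennreal (c1 * \<psi> (D1 z / l1) z + c2 * \<psi> (D2 z / l2) z)"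
        by (rule ennreal_leI)
      also have "\<dots> = ennreal c1 * ennreal (\<psi> (D1 z / l1) z) + ennreal c2 * ennreal (\<psi> (D2 z / l2) z)"
        using elim a c by (simp add: ennreal_plus ennreal_mult)
      finally show ?case .
    qed
    have "Modf M \<psi> (\<lambda>z. D z / (r1 + r2 + e)) \<le>
        (\<integral>\<^sup>+z. ennreal c1 * ennreal (\<psi> (D1 z / l1) z) + ennreal c2 * ennreal (\<psi> (D2 z / l2) z) \<partial>M)"
      unfolding Modf_def l(3)[symmetric] by (rule nn_integral_mono_AE[OF pt])
    also have "\<dots> = ennreal c1 * Modf M \<psi> (\<lambda>z. D1 z / l1) + ennreal c2 * Modf M \<psi> (\<lambda>z. D2 z / l2)"
      unfolding Modf_def using m1[OF l(1)] m2[OF l(2)]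
      by (simp add: nn_integral_add nn_integral_cmult)
    also have "\<dots> \<le> ennreal c1 * 1 + ennreal c2 * 1"
      by (intro add_mono mult_left_mono M1 M2) auto
    also have "\<dots> = 1" using c by (simp add: ennreal_plus[symmetric])
    finally show "Modf M \<psi> (\<lambda>z. D z / (r1 + r2 + e)) \<le> 1" .
  qed
  then show ?thesis using r by (simp add: ennreal_plus)
qed

lemma lux_fatou:
  assumes g: "goodpsi M \<psi>" and e: "e > 0"
    and D: "\<And>k z. D k z \<ge> 0" and Dl: "\<And>z. Dl z \<ge> 0"
    and lim: "AE z in M. (\<lambda>k. D k z) \<longlonglongrightarrow> Dl z"
    and meas: "\<And>k. (\<lambda>z. \<psi> (D k z / e) z) \<in> borel_measurable M"
    and ev: "\<And>k. k \<ge> N \<Longrightarrow> Lux M \<psi> (D k) < ennreal e"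
  shows "Lux M \<psi> Dl \<le> ennreal e"
proof (rule lux_le[OF e])
  have "Modf M \<psi> (\<lambda>z. Dl z / e) = (\<integral>\<^sup>+z. liminf (\<lambda>k. ennreal (\<psi> (D k z / e) z)) \<partial>M)"
    unfolding Modf_def
  proof (rule nn_integral_cong_AE)
    show "AE z in M. ennreal (\<psi> (Dl z / e) z) = liminf (\<lambda>k. ennreal (\<psi> (D k z / e) z))"
      using lim g unfolding goodpsi_def
    proof eventually_elim
      case (elim z)
      have "(\<lambda>k. D k z / e) \<longlonglongrightarrow> Dl z / e" using elim e by (intro tendsto_intros) auto
      then have "(\<lambda>k. \<psi> (D k z / e) z) \<longlonglongrightarrow> \<psi> (Dl z / e) z"
        using elim D Dl e
        by (intro continuous_on_tendsto_compose[of "{0..}" "\<lambda>t. \<psi> t z"]) auto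
      then have "(\<lambda>k. ennreal (\<psi> (D k z / e) z)) \<longlonglongrightarrow> ennreal (\<psi> (Dl z / e) z)"
        by (rule tendsto_ennrealI)
      then show ?case by (simp add: lim_imp_Liminf)
    qed
  qed
  also have "\<dots> \<le> liminf (\<lambda>k. Modf M \<psi> (\<lambda>z. D k z / e))"
    unfolding Modf_def using meas by (intro nn_integral_liminf) simp
  also have "\<dots> \<le> 1"
  proof (rule Liminf_le)
    show "\<forall>\<^sub>F k in sequentially. Modf M \<psi> (\<lambda>z. D k z / e) \<le> 1"
      unfolding eventually_sequentially using lux_lt[OF g D ev] by blast
  qed simp
  finally show "Modf M \<psi> (\<lambda>z. Dl z / e) \<le> 1" .
qed

lemma goodpsi_powr:
  assumes p: "p \<ge> 1"
  shows "goodpsi M (\<lambda>t z. t powr p)"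
proof -
  let ?g = "\<lambda>t::real. t powr p"
  have mid: "?g ((s+t)/2) \<le> (?g s + ?g t)/2" if "s > 0" "t > 0" for s t
  proof -
    have "?g ((1 - 1/2) *\<^sub>R s + (1/2) *\<^sub>R t) \<le> (1 - 1/2) * ?g s + (1/2) * ?g t"
      using convex_onD[OF powr_convex[OF p], of "1/2" s t] that by simp
    moreover have "(1 - 1/2) *\<^sub>R s + (1/2) *\<^sub>R t = (s+t)/2" by simp
    ultimately show ?thesis by (simp add: add_divide_distrib)
  qed
  have bnd: "\<exists>M. \<forall>t. 0<t \<and> t\<le>T \<longrightarrow> ?g t \<le> M" for T
    using p by (intro exI[of _ "T powr p"]) (auto intro: powr_mono2)
  have lim0: "(?g \<longlongrightarrow> 0) (at_right 0)"
    using p by (intro tendsto_zero_powrI) (auto simp: eventually_at_right_less eventually_at_filter)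
  have "continuous_on {0..} ?g" "cvx ?g"
    using BD_main[of ?g, OF mid _ bnd lim0] p by auto
  then show ?thesis unfolding goodpsi_def by simp
qed

lemma Lp_integral_restrict:
  assumes "S \<in> sets lebesgue"
  shows "Lp_integral S p u = (\<integral>\<^sup>+ z. ennreal (cmod (u z) powr p) \<partial>lebesgue_on S)"
  unfolding Lp_integral_def using assms by (simp add: nn_integral_restrict_space)

lemma Lp_norm_top_iff: "Lp_norm S p u < top \<longleftrightarrow> Lp_integral S p u < top"
  unfolding Lp_norm_def by (auto simp: top.not_eq_extremum)

lemma Lp_norm_lux:
  assumes S: "S \<in> sets lebesgue" and p: "p > 0"
    and u: "u \<in> borel_measurable (lebesgue_on S)"
  shows "Lp_norm S p u = Lux (lebesgue_on S) (\<lambda>t z. t powr p) (\<lambda>z. cmod (u z))"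
proof -
  define I where "I = Lp_integral S p u"
  have I: "I = (\<integral>\<^sup>+ z. ennreal (cmod (u z) powr p) \<partial>lebesgue_on S)"
    unfolding I_def by (rule Lp_integral_restrict[OF S])
  have modf: "Modf (lebesgue_on S) (\<lambda>t z. t powr p) (\<lambda>z. cmod (u z) / l) = ennreal (1 / l powr p) * I"
    if l: "l > 0" for l
  proof -
    have "Modf (lebesgue_on S) (\<lambda>t z. t powr p) (\<lambda>z. cmod (u z) / l) =
        (\<integral>\<^sup>+ z. ennreal (1 / l powr p) * ennreal (cmod (u z) powr p) \<partial>lebesgue_on S)"
      unfolding Modf_def using l
      by (intro nn_integral_cong) (simp add: powr_divide ennreal_mult[symmetric])
    also have "\<dots> = ennreal (1 / l powr p) * I"
      unfolding I using u by (intro nn_integral_cmult) measurable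
    finally show ?thesis .
  qed
  show ?thesis
  proof (cases "I = top")
    case True
    have "{l. l > 0 \<and> Modf (lebesgue_on S) (\<lambda>t z. t powr p) (\<lambda>z. cmod (u z) / l) \<le> 1} = {}"
      using True by (auto simp: modf ennreal_mult_top top_unique)
    then show ?thesis using True unfolding Lux_def Lp_norm_def I_def by simp
  next
    case False
    then obtain i where i: "I = ennreal i" "i \<ge> 0" by (cases I) auto
    define r where "r = i powr (1/p)"
    have r: "r \<ge> 0" "r powr p = i" unfolding r_def using p i by (auto simp: powr_powr)
    have LN: "Lp_norm S p u = ennreal r" unfolding Lp_norm_def r_def using i False I_def by simp
    have key: "Modf (lebesgue_on S) (\<lambda>t z. t powr p) (\<lambda>z. cmod (u z) / l) \<le> 1 \<longleftrightarrow> r \<le> l"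
      if l: "l > 0" for l
    proof -
      have "Modf (lebesgue_on S) (\<lambda>t z. t powr p) (\<lambda>z. cmod (u z) / l) = ennreal (i / l powr p)"
        using l i by (simp add: modf ennreal_mult[symmetric])
      also have "\<dots> \<le> 1 \<longleftrightarrow> i / l powr p \<le> 1" by (simp add: ennreal_le_1)
      also have "\<dots> \<longleftrightarrow> r powr p \<le> l powr p" using l r by (simp add: divide_le_eq_1)
      also have "\<dots> \<longleftrightarrow> r \<le> l" using p r l powr_mono2[of p r l] powr_less_mono2[of p l r] by force
      finally show ?thesis .
    qed
    have "Lux (lebesgue_on S) (\<lambda>t z. t powr p) (\<lambda>z. cmod (u z)) = ennreal r"
    proof (rule antisym)
      show "Lux (lebesgue_on S) (\<lambda>t z. t powr p) (\<lambda>z. cmod (u z)) \<le> ennreal r"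
        using r key by (intro lux_le_eps) auto
      show "ennreal r \<le> Lux (lebesgue_on S) (\<lambda>t z. t powr p) (\<lambda>z. cmod (u z))"
        unfolding Lux_def using key by (auto intro!: Inf_greatest)
    qed
    then show ?thesis using LN by simp
  qed
qed

lemma Lp_tri:
  assumes S: "S \<in> sets lebesgue" and p: "p \<ge> 1"
    and u: "u \<in> borel_measurable (lebesgue_on S)" and v: "v \<in> borel_measurable (lebesgue_on S)"
  shows "Lp_norm S p (\<lambda>x. u x + v x) \<le> Lp_norm S p u + Lp_norm S p v"
proof -
  have p0: "p > 0" using p by simp
  have uv: "(\<lambda>x. u x + v x) \<in> borel_measurable (lebesgue_on S)" using u v by measurable
  have mu: "(\<lambda>z. (cmod (u z) / l) powr p) \<in> borel_measurable (lebesgue_on S)" for l using u by measurable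
  have mv: "(\<lambda>z. (cmod (v z) / l) powr p) \<in> borel_measurable (lebesgue_on S)" for l using v by measurable
  show ?thesis
    unfolding Lp_norm_lux[OF S p0 u] Lp_norm_lux[OF S p0 v] Lp_norm_lux[OF S p0 uv] using p
    by (intro lux_triangle[OF goodpsi_powr[OF p]] AE_I2) (auto intro: norm_triangle_ineq mu mv)
qed

lemma Lp_scale:
  assumes S: "S \<in> sets lebesgue" and p: "p \<ge> 1"
    and u: "u \<in> borel_measurable (lebesgue_on S)"
  shows "Lp_norm S p (\<lambda>x. c * u x) = ennreal (cmod c) * Lp_norm S p u"
proof -
  have p0: "p > 0" using p by simp
  have cu: "(\<lambda>x. c * u x) \<in> borel_measurable (lebesgue_on S)" using u by measurable
  show ?thesis
  proof (cases "c = 0")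
    case True
    have "Lux (lebesgue_on S) (\<lambda>t z. t powr p) (\<lambda>z. cmod (c * u z)) = 0"
      using True by (intro lux_zero[OF goodpsi_powr[OF p]]) auto
    then show ?thesis using True unfolding Lp_norm_lux[OF S p0 cu] by simp
  next
    case False
    have "Lux (lebesgue_on S) (\<lambda>t z. t powr p) (\<lambda>z. cmod c * cmod (u z)) =
        ennreal (cmod c) * Lux (lebesgue_on S) (\<lambda>t z. t powr p) (\<lambda>z. cmod (u z))"
      using False by (intro lux_scale[OF goodpsi_powr[OF p]]) auto
    then show ?thesis unfolding Lp_norm_lux[OF S p0 cu] Lp_norm_lux[OF S p0 u] using p
      by (simp add: norm_mult)
  qed
qed

lemma Lp_cong:
  assumes S: "S \<in> sets lebesgue" and p: "p \<ge> 1" and p0: "p > 0"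
    and u: "u \<in> borel_measurable (lebesgue_on S)" and v: "v \<in> borel_measurable (lebesgue_on S)"
    and e: "AE x in lebesgue_on S. u x = v x"
  shows "Lp_norm S p u = Lp_norm S p v"
  using p unfolding Lp_norm_lux[OF S p0 u] Lp_norm_lux[OF S p0 v] using p
  by (intro lux_cong_AE) (use e in \<open>auto elim!: eventually_mono\<close>)

lemma Lp_zero_iff:
  assumes S: "S \<in> sets lebesgue" and p: "p \<ge> 1" and p0: "p > 0"
    and u: "u \<in> borel_measurable (lebesgue_on S)"
  shows "Lp_norm S p u = 0 \<longleftrightarrow> (AE x in lebesgue_on S. u x = 0)"
proof
  assume a: "AE x in lebesgue_on S. u x = 0"
  show "Lp_norm S p u = 0" unfolding Lp_norm_lux[OF S p0 u] using p
    by (intro lux_zero[OF goodpsi_powr[OF p]]) (use a in \<open>auto elim!: eventually_mono\<close>)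
next
  assume z: "Lp_norm S p u = 0"
  then have nt: "Lp_integral S p u \<noteq> top" unfolding Lp_norm_def by auto
  then obtain i where i: "Lp_integral S p u = ennreal i" "i \<ge> 0"
    by (cases "Lp_integral S p u") auto
  then have "ennreal (i powr (1/p)) = 0" using z nt unfolding Lp_norm_def by simp
  then have "i powr (1/p) \<le> 0" by simp
  then have "i = 0" using i(2) by (smt (verit) powr_eq_0_iff powr_ge_zero)
  then have "(\<integral>\<^sup>+ z. ennreal (cmod (u z) powr p) \<partial>lebesgue_on S) = 0"
    using i Lp_integral_restrict[OF S] by simp
  then have "AE x in lebesgue_on S. ennreal (cmod (u x) powr p) = 0"
    using u by (subst (asm) nn_integral_0_iff_AE) auto
  then show "AE x in lebesgue_on S. u x = 0"
    by (rule eventually_mono) simp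
qed

lemma Lp_set_mono:
  assumes "K \<subseteq> S"
  shows "Lp_integral K p u \<le> Lp_integral S p u"
  unfolding Lp_integral_def using assms
  by (intro nn_integral_mono) (auto split: split_indicator)

lemma compact_sets_lebesgue: "compact K \<Longrightarrow> K \<in> sets lebesgue"
  by (simp add: compact_imp_closed borel_closed)

lemma Lp_loc_1:
  assumes S: "S \<in> sets lebesgue" and p: "p \<ge> 1" and u: "u \<in> Lp_loc_space S p"
  shows "u \<in> Lp_loc_space S 1"
  unfolding Lp_loc_space_def
proof (intro CollectI conjI allI impI)
  show um: "u \<in> borel_measurable (lebesgue_on S)" using u unfolding Lp_loc_space_def by simp
  fix K assume K: "compact K \<and> K \<subseteq> S"
  have Kl: "K \<in> sets lebesgue" using K compact_sets_lebesgue by auto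
  have uK: "u \<in> borel_measurable (lebesgue_on K)" using measurable_restrict_mono[OF um] K by auto
  have "Lp_integral K 1 u = (\<integral>\<^sup>+ z. ennreal (cmod (u z) powr 1) \<partial>lebesgue_on K)"
    by (rule Lp_integral_restrict[OF Kl])
  also have "\<dots> \<le> (\<integral>\<^sup>+ z. ennreal 1 + ennreal (cmod (u z) powr p) \<partial>lebesgue_on K)"
  proof (intro nn_integral_mono)
    fix x
    have "cmod (u x) powr 1 \<le> 1 + cmod (u x) powr p"
    proof (cases "cmod (u x) \<le> 1")
      case True then show ?thesis by (simp add: add_increasing2)
    next
      case False
      then have "cmod (u x) powr 1 \<le> cmod (u x) powr p" using p by (intro powr_mono) auto
      then show ?thesis by simp
    qed
    then have "ennreal (cmod (u x) powr 1) \<le> ennreal (1 + cmod (u x) powr p)"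
      by (rule ennreal_leI)
    then show "ennreal (cmod (u x) powr 1) \<le> ennreal 1 + ennreal (cmod (u x) powr p)"
      by (simp add: ennreal_plus)
  qed
  also have "\<dots> = emeasure lebesgue K + Lp_integral K p u"
    using uK Kl by (subst nn_integral_add) (auto simp: Lp_integral_restrict emeasure_restrict_space)
  also have "\<dots> < top"
  proof -
    have "emeasure lebesgue K < top" using K emeasure_compact_finite[of K] compact_imp_closed[of K]
      by (simp add: borel_closed)
    moreover have "Lp_integral K p u < top" using u K unfolding Lp_loc_space_def by auto
    ultimately show ?thesis by simp
  qed
  finally show "Lp_integral K 1 u < top" .
qed

lemma Lp_loc_add:
  assumes S: "S \<in> sets lebesgue" and p: "p \<ge> 1"
    and u: "u \<in> Lp_loc_space S p" and v: "v \<in> Lp_loc_space S p"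
  shows "(\<lambda>x. u x + v x) \<in> Lp_loc_space S p"
  unfolding Lp_loc_space_def
proof (intro CollectI conjI allI impI)
  have um: "u \<in> borel_measurable (lebesgue_on S)" and vm: "v \<in> borel_measurable (lebesgue_on S)"
    using u v unfolding Lp_loc_space_def by auto
  then show "(\<lambda>x. u x + v x) \<in> borel_measurable (lebesgue_on S)" by measurable
  fix K assume K: "compact K \<and> K \<subseteq> S"
  have Kl: "K \<in> sets lebesgue" using K compact_sets_lebesgue by auto
  have uK: "u \<in> borel_measurable (lebesgue_on K)" using measurable_restrict_mono[OF um] K by auto
  have vK: "v \<in> borel_measurable (lebesgue_on K)" using measurable_restrict_mono[OF vm] K by auto
  have "Lp_norm K p u < top" "Lp_norm K p v < top"
    using u v K unfolding Lp_loc_space_def Lp_norm_top_iff by auto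
  then have "Lp_norm K p (\<lambda>x. u x + v x) < top"
    using Lp_tri[OF Kl p uK vK] by (simp add: le_less_trans)
  then show "Lp_integral K p (\<lambda>x. u x + v x) < top" unfolding Lp_norm_top_iff .
qed

lemma Lp_loc_scale:
  assumes S: "S \<in> sets lebesgue" and p: "p \<ge> 1"
    and u: "u \<in> Lp_loc_space S p"
  shows "(\<lambda>x. c * u x) \<in> Lp_loc_space S p"
  unfolding Lp_loc_space_def
proof (intro CollectI conjI allI impI)
  have um: "u \<in> borel_measurable (lebesgue_on S)"
    using u unfolding Lp_loc_space_def by auto
  then show "(\<lambda>x. c * u x) \<in> borel_measurable (lebesgue_on S)" by measurable
  fix K assume K: "compact K \<and> K \<subseteq> S"
  have Kl: "K \<in> sets lebesgue" using K compact_sets_lebesgue by auto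
  have uK: "u \<in> borel_measurable (lebesgue_on K)" using measurable_restrict_mono[OF um] K by auto
  have "Lp_norm K p u < top"
    using u K unfolding Lp_loc_space_def Lp_norm_top_iff by auto
  then have "Lp_norm K p (\<lambda>x. c * u x) < top"
    using Lp_scale[OF Kl p uK, of c] by (simp add: ennreal_mult_less_top)
  then show "Lp_integral K p (\<lambda>x. c * u x) < top" unfolding Lp_norm_top_iff .
qed

lemma Lp_loc_global:
  assumes S: "S \<in> sets lebesgue"
    and u: "u \<in> borel_measurable (lebesgue_on S)" and f: "Lp_integral S p u < top"
  shows "u \<in> Lp_loc_space S p"
  unfolding Lp_loc_space_def using u f Lp_set_mono[of _ S p u]
  by (auto intro: le_less_trans)

lemma null_fst_lborel:
  fixes B :: "'a::euclidean_space set"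
  assumes "B \<in> null_sets lborel"
  shows "B \<times> (UNIV::'a set) \<in> null_sets (lborel :: ('a \<times> 'a) measure)"
    and "(UNIV::'a set) \<times> B \<in> null_sets (lborel :: ('a \<times> 'a) measure)"
proof -
  have B: "B \<in> sets lborel" "emeasure lborel B = 0" using assms by auto
  have "B \<times> (UNIV::'a set) \<in> null_sets (lborel \<Otimes>\<^sub>M (lborel::'a measure))"
    using B by (auto simp: lborel.emeasure_pair_measure_Times)
  then show "B \<times> (UNIV::'a set) \<in> null_sets (lborel :: ('a \<times> 'a) measure)"
    by (simp add: lborel_prod)
  have "(UNIV::'a set) \<times> B \<in> null_sets (lborel \<Otimes>\<^sub>M (lborel::'a measure))"
    using B by (auto simp: lborel.emeasure_pair_measure_Times)
  then show "(UNIV::'a set) \<times> B \<in> null_sets (lborel :: ('a \<times> 'a) measure)"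
    by (simp add: lborel_prod)
qed

lemma AE_pair_lift:
  fixes \<Omega> :: "'a::euclidean_space set"
  assumes O: "open \<Omega>" and P: "AE x in lebesgue_on \<Omega>. P x"
  shows "AE z in lebesgue_on (\<Omega> \<times> \<Omega>). P (fst z) \<and> P (snd z)"
proof -
  have Ol: "\<Omega> \<in> sets lebesgue" using O by simp
  have OOl: "\<Omega> \<times> \<Omega> \<in> sets (lebesgue :: ('a\<times>'a) measure)" using O
    by (simp add: open_Times)
  obtain N where N2: "\<And>x. x \<in> space (lebesgue_on \<Omega>) - N \<Longrightarrow> P x" and N: "N \<in> null_sets (lebesgue_on \<Omega>)"
    by (rule AE_E3[OF P]) (rule that)
  have N1: "N \<in> null_sets lebesgue" by (rule conjunct2[OF null_sets_restrict_space[OF Ol, THEN iffD1, OF N]])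
  obtain B where B: "B \<in> null_sets lborel" "N \<subseteq> B"
    using null_sets_completion_iff2[THEN iffD1, OF N1] by (elim bexE)
  define C where "C = (B \<times> UNIV \<union> UNIV \<times> B) \<inter> (\<Omega> \<times> \<Omega>)"
  have "B \<times> UNIV \<union> UNIV \<times> B \<in> null_sets (lborel :: ('a \<times> 'a) measure)"
    using null_sets.Un[OF null_fst_lborel[OF B(1)]] .
  then have "B \<times> UNIV \<union> UNIV \<times> B \<in> null_sets (lebesgue :: ('a \<times> 'a) measure)"
    by (rule null_sets_completionI)
  then have "C \<in> null_sets (lebesgue :: ('a \<times> 'a) measure)"
    by (rule null_sets_completion_subset[rotated]) (simp add: C_def)
  moreover have "C \<subseteq> \<Omega> \<times> \<Omega>" unfolding C_def by blast
  ultimately have C: "C \<in> null_sets (lebesgue_on (\<Omega> \<times> \<Omega>))"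
    using null_sets_restrict_space[OF OOl] by blast
  show ?thesis
  proof (rule AE_I'[OF C])
    show "{z \<in> space (lebesgue_on (\<Omega> \<times> \<Omega>)). \<not> (P (fst z) \<and> P (snd z))} \<subseteq> C"
    proof
      fix z assume z: "z \<in> {z \<in> space (lebesgue_on (\<Omega> \<times> \<Omega>)). \<not> (P (fst z) \<and> P (snd z))}"
      then have zO: "z \<in> \<Omega> \<times> \<Omega>" using OOl by simp
      then have "fst z \<in> \<Omega>" "snd z \<in> \<Omega>" by (auto simp: mem_Times_iff)
      then have "fst z \<in> N \<or> snd z \<in> N" using N2 Ol z by auto
      then have "fst z \<in> B \<or> snd z \<in> B" using B(2) by auto
      then show "z \<in> C" unfolding C_def using zO by (auto simp: mem_Times_iff)
    qed
  qed
qed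

lemma nn_integral_reflect:
  fixes a :: "'a::euclidean_space \<Rightarrow> real"
  assumes a: "a \<in> borel_measurable borel"
  shows "(\<integral>\<^sup>+y. ennreal (a (x - y)) \<partial>lborel) = (\<integral>\<^sup>+y. ennreal (a y) \<partial>lborel)"
proof -
  have L: "(lborel::'a measure) = distr lborel borel (\<lambda>y. x + (-1::real) *\<^sub>R y)"
    using lborel_affine[of "-1::real" x] by (simp add: density_1)
  have "(\<integral>\<^sup>+y. ennreal (a y) \<partial>lborel) =
      (\<integral>\<^sup>+y. ennreal (a y) \<partial>distr lborel borel (\<lambda>y. x + (-1::real) *\<^sub>R y))"
    using L by (rule arg_cong[where f="\<lambda>M. \<integral>\<^sup>+y. ennreal (a y) \<partial>M"])
  also have "\<dots> = (\<integral>\<^sup>+y. ennreal (a (x + (-1) *\<^sub>R y)) \<partial>lborel)"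
    using a by (intro nn_integral_distr) auto
  finally show ?thesis by simp
qed

lemma nn_integral_translate:
  fixes a :: "'a::euclidean_space \<Rightarrow> real"
  assumes a: "a \<in> borel_measurable borel"
  shows "(\<integral>\<^sup>+x. ennreal (a (x - y)) \<partial>lborel) = (\<integral>\<^sup>+x. ennreal (a x) \<partial>lborel)"
proof -
  have L: "(lborel::'a measure) = distr lborel borel (\<lambda>x. (-y) + (1::real) *\<^sub>R x)"
    using lborel_affine[of "1::real" "-y"] by (simp add: density_1)
  have "(\<integral>\<^sup>+x. ennreal (a x) \<partial>lborel) =
      (\<integral>\<^sup>+x. ennreal (a x) \<partial>distr lborel borel (\<lambda>x. (-y) + (1::real) *\<^sub>R x))"
    using L by (rule arg_cong[where f="\<lambda>M. \<integral>\<^sup>+x. ennreal (a x) \<partial>M"])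
  also have "\<dots> = (\<integral>\<^sup>+x. ennreal (a ((-y) + 1 *\<^sub>R x)) \<partial>lborel)"
    using a by (intro nn_integral_distr) auto
  finally show ?thesis by simp
qed

lemma tonelli_fst:
  fixes a g :: "'a::euclidean_space \<Rightarrow> real"
  assumes a[measurable]: "a \<in> borel_measurable borel" and g[measurable]: "g \<in> borel_measurable borel"
  shows "(\<integral>\<^sup>+z. ennreal (g (fst z)) * ennreal (a (fst z - snd z)) \<partial>(lborel :: ('a\<times>'a) measure))
      = (\<integral>\<^sup>+x. ennreal (g x) \<partial>lborel) * (\<integral>\<^sup>+y. ennreal (a y) \<partial>lborel)"
proof -
  have "(\<integral>\<^sup>+z. ennreal (g (fst z)) * ennreal (a (fst z - snd z)) \<partial>(lborel :: ('a\<times>'a) measure))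
      = (\<integral>\<^sup>+z. ennreal (g (fst z)) * ennreal (a (fst z - snd z)) \<partial>(lborel \<Otimes>\<^sub>M lborel))"
    by (simp add: lborel_prod)
  also have "\<dots> = (\<integral>\<^sup>+x. \<integral>\<^sup>+y. ennreal (g x) * ennreal (a (x - y)) \<partial>lborel \<partial>lborel)"
    by (subst lborel.nn_integral_fst[symmetric]) auto
  also have "\<dots> = (\<integral>\<^sup>+x. ennreal (g x) * (\<integral>\<^sup>+y. ennreal (a y) \<partial>lborel) \<partial>lborel)"
    by (intro nn_integral_cong) (simp add: nn_integral_cmult nn_integral_reflect)
  also have "\<dots> = (\<integral>\<^sup>+x. ennreal (g x) \<partial>lborel) * (\<integral>\<^sup>+y. ennreal (a y) \<partial>lborel)"
    by (simp add: nn_integral_multc)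
  finally show ?thesis .
qed

lemma tonelli_snd:
  fixes a g :: "'a::euclidean_space \<Rightarrow> real"
  assumes a[measurable]: "a \<in> borel_measurable borel" and g[measurable]: "g \<in> borel_measurable borel"
  shows "(\<integral>\<^sup>+z. ennreal (g (snd z)) * ennreal (a (fst z - snd z)) \<partial>(lborel :: ('a\<times>'a) measure))
      = (\<integral>\<^sup>+x. ennreal (g x) \<partial>lborel) * (\<integral>\<^sup>+y. ennreal (a y) \<partial>lborel)"
proof -
  have "(\<integral>\<^sup>+z. ennreal (g (snd z)) * ennreal (a (fst z - snd z)) \<partial>(lborel :: ('a\<times>'a) measure))
      = (\<integral>\<^sup>+z. ennreal (g (snd z)) * ennreal (a (fst z - snd z)) \<partial>(lborel \<Otimes>\<^sub>M lborel))"
    by (simp add: lborel_prod)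
  also have "\<dots> = (\<integral>\<^sup>+y. \<integral>\<^sup>+x. ennreal (g y) * ennreal (a (x - y)) \<partial>lborel \<partial>lborel)"
    by (subst lborel_pair.nn_integral_snd[symmetric]) auto
  also have "\<dots> = (\<integral>\<^sup>+y. ennreal (g y) * (\<integral>\<^sup>+x. ennreal (a x) \<partial>lborel) \<partial>lborel)"
    by (intro nn_integral_cong) (simp add: nn_integral_cmult nn_integral_translate)
  also have "\<dots> = (\<integral>\<^sup>+x. ennreal (g x) \<partial>lborel) * (\<integral>\<^sup>+y. ennreal (a y) \<partial>lborel)"
    by (simp add: nn_integral_multc)
  finally show ?thesis .
qed

definition DD :: "('a \<Rightarrow> complex) \<Rightarrow> 'a \<times> 'a \<Rightarrow> real" where
  "DD u z = cmod (u (fst z) - u (snd z))"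

definition psiF :: "(real \<Rightarrow> 'a \<Rightarrow> 'a \<Rightarrow> real) \<Rightarrow> ('a::real_vector \<Rightarrow> real) \<Rightarrow> real \<Rightarrow> 'a \<times> 'a \<Rightarrow> real" where
  "psiF \<phi> a t z = \<phi> t (fst z) (snd z) * max 0 (a (fst z - snd z))"

lemma DD_nonneg: "DD u z \<ge> 0" unfolding DD_def by simp

lemma borel_on_lebesgue:
  "f \<in> borel_measurable borel \<Longrightarrow> f \<in> borel_measurable (lebesgue_on S)"
  by (intro measurable_restrict_space1 measurable_completion) simp

lemma seminorm_eq:
  fixes \<Omega> :: "'a::euclidean_space set"
  assumes O: "open \<Omega>" and phi_nonneg: "\<forall>t\<ge>0. \<forall>x\<in>\<Omega>. \<forall>y\<in>\<Omega>. \<phi> t x y \<ge> 0"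
  shows "seminorm_p \<Omega> \<phi> a u = Lux (lebesgue_on (\<Omega>\<times>\<Omega>)) (psiF \<phi> a) (DD u)"
proof -
  have OOl: "\<Omega> \<times> \<Omega> \<in> sets (lebesgue :: ('a\<times>'a) measure)" using O
    by (simp add: open_Times)
  have eq: "Ffun \<Omega> \<phi> a (\<lambda>x. u x / complex_of_real l) = Modf (lebesgue_on (\<Omega>\<times>\<Omega>)) (psiF \<phi> a) (\<lambda>z. DD u z / l)"
    if l: "l > 0" for l
  proof -
    have "Ffun \<Omega> \<phi> a (\<lambda>x. u x / complex_of_real l) =
      (\<integral>\<^sup>+ z. ennreal (\<phi> (cmod (u (fst z) / complex_of_real l - u (snd z) / complex_of_real l)) (fst z) (snd z)
          * a (fst z - snd z)) \<partial>lebesgue_on (\<Omega>\<times>\<Omega>))"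
      unfolding Ffun_def using OOl by (simp add: nn_integral_restrict_space)
    also have "\<dots> = Modf (lebesgue_on (\<Omega>\<times>\<Omega>)) (psiF \<phi> a) (\<lambda>z. DD u z / l)"
      unfolding Modf_def
    proof (intro nn_integral_cong)
      fix z assume "z \<in> space (lebesgue_on (\<Omega>\<times>\<Omega>))"
      then have z: "fst z \<in> \<Omega>" "snd z \<in> \<Omega>" using OOl by (auto simp: mem_Times_iff)
      have c: "cmod (u (fst z) / complex_of_real l - u (snd z) / complex_of_real l) = DD u z / l"
        unfolding DD_def using l by (simp add: diff_divide_distrib[symmetric] norm_divide)
      have nn: "\<phi> (DD u z / l) (fst z) (snd z) \<ge> 0" using phi_nonneg z l DD_nonneg[of u z] by auto
      show "ennreal (\<phi> (cmod (u (fst z) / complex_of_real l - u (snd z) / complex_of_real l)) (fst z) (snd z)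
          * a (fst z - snd z)) = ennreal (psiF \<phi> a (DD u z / l) z)"
        unfolding c psiF_def using nn
        by (cases "a (fst z - snd z) \<ge> 0") (auto simp: max_def ennreal_neg mult_nonneg_nonpos)
    qed
    finally show ?thesis .
  qed
  show ?thesis unfolding seminorm_p_def Lux_def
    by (rule arg_cong[where f="\<lambda>X. Inf (ennreal ` X)"]) (use eq in auto)
qed

lemma phi_bound:
  fixes \<Omega> :: "'a::euclidean_space set"
  assumes C3: "cond_C3 \<Omega> \<phi> pm pp \<beta>" and C4: "cond_C4 \<Omega> \<phi> c1"
  shows "AE z in lebesgue_on (\<Omega>\<times>\<Omega>). (\<forall>t. 0 < t \<and> t \<le> 1 \<longrightarrow> \<phi> t (fst z) (snd z) \<le> \<beta> * c1 * t powr pm)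
     \<and> (\<forall>t\<ge>1. \<phi> t (fst z) (snd z) \<le> \<beta> * c1 * t powr pp)
     \<and> (\<forall>t\<ge>0. \<phi> t (fst z) (snd z) \<le> \<beta> * c1 * (t powr pm + t powr pp))"
proof -
  have b: "\<beta> \<ge> 1" "c1 > 0" using C3 C4 unfolding cond_C3_def cond_C4_def by auto
  have A3: "AE z in lebesgue_on (\<Omega> \<times> \<Omega>).
        (\<forall>s t. 0 < s \<and> s \<le> t \<longrightarrow>
           \<phi> s (fst z) (snd z) / s powr pm \<le> \<beta> * (\<phi> t (fst z) (snd z) / t powr pm)) \<and>
        (\<forall>s t. 0 < s \<and> s \<le> t \<longrightarrow>
           \<beta> * (\<phi> s (fst z) (snd z) / s powr pp) \<ge> \<phi> t (fst z) (snd z) / t powr pp)"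
    using C3 unfolding cond_C3_def by blast
  have A4: "AE z in lebesgue_on (\<Omega> \<times> \<Omega>). 1 / c1 \<le> \<phi> 1 (fst z) (snd z) \<and> \<phi> 1 (fst z) (snd z) \<le> c1 \<and>
        \<phi> 0 (fst z) (snd z) = 0 \<and> (\<forall>t>0. \<phi> t (fst z) (snd z) > 0)"
    using C4 unfolding cond_C4_def by blast
  show ?thesis
    using A3 A4
  proof eventually_elim
    case (elim z)
    define g where "g t = \<phi> t (fst z) (snd z)" for t
    have g1: "g 1 \<le> c1" "g 0 = 0" and gp: "\<And>t. t > 0 \<Longrightarrow> g t > 0" using elim unfolding g_def by auto
    have lo: "g t \<le> \<beta> * c1 * t powr pm" if t: "0 < t" "t \<le> 1" for t
    proof -
      have "g t / t powr pm \<le> \<beta> * (g 1 / 1 powr pm)" using elim t unfolding g_def by blast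
      then have "g t \<le> \<beta> * g 1 * t powr pm" using t by (simp add: divide_le_eq mult.commute)
      also have "\<dots> \<le> \<beta> * c1 * t powr pm" using g1 b by (intro mult_right_mono) auto
      finally show ?thesis .
    qed
    have hi: "g t \<le> \<beta> * c1 * t powr pp" if t: "t \<ge> 1" for t
    proof -
      have H: "\<forall>s t. 0 < s \<and> s \<le> t \<longrightarrow> \<beta> * (g s / s powr pp) \<ge> g t / t powr pp"
        using elim unfolding g_def by blast
      have "\<beta> * (g 1 / 1 powr pp) \<ge> g t / t powr pp" using H[rule_format, of 1 t] t by simp
      then have "g t \<le> \<beta> * g 1 * t powr pp" using t by (simp add: divide_le_eq mult.commute)
      also have "\<dots> \<le> \<beta> * c1 * t powr pp" using g1 b by (intro mult_right_mono) auto
      finally show ?thesis .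
    qed
    have all: "g t \<le> \<beta> * c1 * (t powr pm + t powr pp)" if t: "t \<ge> 0" for t
    proof -
      consider "t = 0" | "0 < t" "t \<le> 1" | "t \<ge> 1" using t by force
      then show ?thesis
      proof cases
        case 1 then show ?thesis using g1 by simp
      next
        case 2
        then have "g t \<le> \<beta> * c1 * t powr pm" by (rule lo)
        also have "\<dots> \<le> \<beta> * c1 * (t powr pm + t powr pp)" using b by (intro mult_left_mono) auto
        finally show ?thesis .
      next
        case 3
        then have "g t \<le> \<beta> * c1 * t powr pp" by (rule hi)
        also have "\<dots> \<le> \<beta> * c1 * (t powr pm + t powr pp)" using b by (intro mult_left_mono) auto
        finally show ?thesis .
      qed
    qed
    show ?case using lo hi all unfolding g_def by blast
  qed
qed

lemma cvx_scale: "cvx g \<Longrightarrow> c \<ge> 0 \<Longrightarrow> cvx (\<lambda>t. g t * c)"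
  unfolding cvx_def
proof (intro allI impI)
  fix x y \<theta> :: real
  assume g: "\<forall>x\<ge>0. \<forall>y\<ge>0. \<forall>\<theta>. 0 \<le> \<theta> \<and> \<theta> \<le> 1 \<longrightarrow> g ((1 - \<theta>) * x + \<theta> * y) \<le> (1 - \<theta>) * g x + \<theta> * g y"
    and c: "c \<ge> 0" and a: "0 \<le> x" "0 \<le> y" "0 \<le> \<theta> \<and> \<theta> \<le> 1"
  have "g ((1 - \<theta>) * x + \<theta> * y) * c \<le> ((1 - \<theta>) * g x + \<theta> * g y) * c"
    using g a c by (intro mult_right_mono) auto
  then show "g ((1 - \<theta>) * x + \<theta> * y) * c \<le> (1 - \<theta>) * (g x * c) + \<theta> * (g y * c)"
    by (simp add: algebra_simps)
qed

lemma goodpsiF: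
  fixes \<Omega> :: "'a::euclidean_space set"
  assumes O: "open \<Omega>" and phi_nonneg: "\<forall>t\<ge>0. \<forall>x\<in>\<Omega>. \<forall>y\<in>\<Omega>. \<phi> t x y \<ge> 0"
    and C2: "cond_C2 \<Omega> \<phi>" and C3: "cond_C3 \<Omega> \<phi> pm pp \<beta>" and C4: "cond_C4 \<Omega> \<phi> c1"
  shows "goodpsi (lebesgue_on (\<Omega>\<times>\<Omega>)) (psiF \<phi> a)"
proof -
  have OOl: "\<Omega> \<times> \<Omega> \<in> sets (lebesgue :: ('a\<times>'a) measure)" using O
    by (simp add: open_Times)
  have b: "\<beta> \<ge> 1" "c1 > 0" "pm > 1" "pp \<ge> pm" using C3 C4 unfolding cond_C3_def cond_C4_def by auto
  let ?Q = "\<lambda>(n::nat) z. \<exists>\<delta>. 0 < \<delta> \<and> \<delta> < 1 \<and> (\<forall>s t. s > 0 \<and> t > 0 \<and> \<bar>s - t\<bar> \<ge> (1/(Suc n)) * max s t \<longrightarrow>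
        \<phi> ((s + t) / 2) (fst z) (snd z) \<le> (1 - \<delta>) * ((\<phi> s (fst z) (snd z) + \<phi> t (fst z) (snd z)) / 2))"
  have "AE z in lebesgue_on (\<Omega>\<times>\<Omega>). ?Q n z" for n
  proof -
    obtain \<delta> where d: "0 < \<delta>" "\<delta> < 1" "AE z in lebesgue_on (\<Omega> \<times> \<Omega>). \<forall>s t. s > 0 \<and> t > 0 \<and> \<bar>s - t\<bar> \<ge> (1/(Suc n)) * max s t \<longrightarrow>
        \<phi> ((s + t) / 2) (fst z) (snd z) \<le> (1 - \<delta>) * ((\<phi> s (fst z) (snd z) + \<phi> t (fst z) (snd z)) / 2)"
      using C2[unfolded cond_C2_def, rule_format, of "1/real (Suc n)"] by auto
    from d(3) show ?thesis by eventually_elim (use d(1,2) in blast)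
  qed
  then have AQ: "AE z in lebesgue_on (\<Omega>\<times>\<Omega>). \<forall>n. ?Q n z" by (simp add: AE_all_countable)
  have AC4: "AE z in lebesgue_on (\<Omega> \<times> \<Omega>). \<phi> 0 (fst z) (snd z) = 0"
    using C4 unfolding cond_C4_def by (auto elim: eventually_mono)
  have Asp: "AE z in lebesgue_on (\<Omega> \<times> \<Omega>). z \<in> \<Omega> \<times> \<Omega>"
    using OOl by (intro AE_I2) simp
  show ?thesis unfolding goodpsi_def
    using AQ AC4 Asp phi_bound[OF C3 C4]
  proof eventually_elim
    case (elim z)
    define g where "g t = \<phi> t (fst z) (snd z)" for t
    define A where "A = max 0 (a (fst z - snd z))"
    have A: "A \<ge> 0" unfolding A_def by simp
    have zO: "fst z \<in> \<Omega>" "snd z \<in> \<Omega>" using elim by (auto simp: mem_Times_iff)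
    have gnn: "\<And>t. t \<ge> 0 \<Longrightarrow> g t \<ge> 0" unfolding g_def using phi_nonneg zO by auto
    have g0: "g 0 = 0" using elim unfolding g_def by simp
    have mid: "g ((s+t)/2) \<le> (g s + g t)/2" if st: "s > 0" "t > 0" for s t
    proof (cases "s = t")
      case True then show ?thesis by simp
    next
      case False
      have "\<bar>s - t\<bar> / max s t > 0" using False st by (auto simp: max_def)
      then obtain n where n: "inverse (real (Suc n)) < \<bar>s - t\<bar> / max s t"
        using reals_Archimedean by blast
      have mx: "max s t > 0" using st by (auto simp: max_def)
      have "(1/(Suc n)) * max s t \<le> \<bar>s - t\<bar>"
        using n mx by (simp add: field_simps)
      moreover obtain \<delta> where d: "0 < \<delta>" "\<delta> < 1" "\<forall>s t. s > 0 \<and> t > 0 \<and> \<bar>s - t\<bar> \<ge> (1/(Suc n)) * max s t \<longrightarrow>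
        g ((s + t) / 2) \<le> (1 - \<delta>) * ((g s + g t) / 2)"
        using elim unfolding g_def by blast
      ultimately have "g ((s + t) / 2) \<le> (1 - \<delta>) * ((g s + g t) / 2)" using st by blast
      also have "\<dots> \<le> (g s + g t) / 2"
        using d gnn[of s] gnn[of t] st by (intro mult_left_le_one_le) auto
      finally show ?thesis .
    qed
    have lo: "\<And>t. 0 < t \<Longrightarrow> t \<le> 1 \<Longrightarrow> g t \<le> \<beta> * c1 * t powr pm"
      and hi: "\<And>t. t \<ge> 1 \<Longrightarrow> g t \<le> \<beta> * c1 * t powr pp"
      using elim unfolding g_def by auto
    have bnd: "\<exists>M. \<forall>t. 0<t \<and> t\<le>T \<longrightarrow> g t \<le> M" if "T > 0" for T
    proof (intro exI[of _ "\<beta> * c1 * (1 + T powr pp)"] allI impI)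
      fix t assume t: "0 < t \<and> t \<le> T"
      show "g t \<le> \<beta> * c1 * (1 + T powr pp)"
      proof (cases "t \<le> 1")
        case True
        then have "g t \<le> \<beta> * c1 * t powr pm" using lo t by simp
        also have "\<dots> \<le> \<beta> * c1 * 1" using b True t by (intro mult_left_mono powr_le1) auto
        also have "\<dots> \<le> \<beta> * c1 * (1 + T powr pp)" using b by (intro mult_left_mono) auto
        finally show ?thesis .
      next
        case False
        then have "g t \<le> \<beta> * c1 * t powr pp" using hi by simp
        also have "\<dots> \<le> \<beta> * c1 * T powr pp" using b t False by (intro mult_left_mono powr_mono2) auto
        also have "\<dots> \<le> \<beta> * c1 * (1 + T powr pp)" using b by (intro mult_left_mono) auto
        finally show ?thesis .
      qed
    qed
    have lim0: "(g \<longlongrightarrow> 0) (at_right 0)"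
    proof (rule tendsto_sandwich[of "\<lambda>_. 0" _ _ "\<lambda>t. \<beta> * c1 * t powr pm"])
      show "\<forall>\<^sub>F t in at_right 0. 0 \<le> g t"
        unfolding eventually_at_right_field using gnn by (intro exI[of _ 1]) auto
      show "\<forall>\<^sub>F t in at_right 0. g t \<le> \<beta> * c1 * t powr pm"
        unfolding eventually_at_right_field using lo by (intro exI[of _ 1]) auto
      show "((\<lambda>_. 0) \<longlongrightarrow> (0::real)) (at_right 0)" by simp
      have "((\<lambda>t. t powr pm) \<longlongrightarrow> 0) (at_right 0)"
        using b by (intro tendsto_zero_powrI[of "\<lambda>t. t" _ "\<lambda>_. pm" pm])
          (auto simp: eventually_at_right_field intro: exI[of _ 1] tendsto_ident_at)
      from tendsto_mult_left[OF this, of "\<beta> * c1"]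
      show "((\<lambda>t. \<beta> * c1 * t powr pm) \<longlongrightarrow> 0) (at_right 0)" by simp
    qed
    have BD: "continuous_on {0..} g" "cvx g" using BD_main[of g, OF mid g0 bnd lim0] by auto
    have "cvx (\<lambda>t. g t * A)" by (rule cvx_scale[OF BD(2) A])
    moreover have "continuous_on {0..} (\<lambda>t. g t * A)" using BD(1) by (intro continuous_intros)
    ultimately show ?case using g0 gnn A unfolding psiF_def g_def[symmetric] A_def[symmetric]
      by auto
  qed
qed

lemma psiF_meas:
  fixes \<Omega> :: "'a::euclidean_space set"
  assumes O: "open \<Omega>" and C1: "cond_C1 \<Omega> \<phi>" and pm: "pm \<ge> 1"
    and a: "a \<in> borel_measurable borel" and u: "u \<in> Lp_loc_space \<Omega> pm" and l: "l > 0"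
  shows "(\<lambda>z. psiF \<phi> a (DD u z / l) z) \<in> borel_measurable (lebesgue_on (\<Omega>\<times>\<Omega>))"
proof -
  have Ol: "\<Omega> \<in> sets lebesgue" using O by simp
  define w where "w x = complex_of_real (1/l) * u x" for x
  have "w \<in> Lp_loc_space \<Omega> pm" unfolding w_def by (rule Lp_loc_scale[OF Ol pm u])
  then have "w \<in> Lp_loc_space \<Omega> 1" by (rule Lp_loc_1[OF Ol pm])
  then have m1: "(\<lambda>z. \<phi> (cmod (w (fst z) - w (snd z))) (fst z) (snd z)) \<in> borel_measurable (lebesgue_on (\<Omega> \<times> \<Omega>))"
    using C1 unfolding cond_C1_def by blast
  have e: "cmod (w (fst z) - w (snd z)) = DD u z / l" for z
  proof -
    have "w (fst z) - w (snd z) = complex_of_real (1/l) * (u (fst z) - u (snd z))"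
      unfolding w_def by (simp add: algebra_simps)
    then show ?thesis unfolding DD_def using l by (simp add: norm_mult norm_divide)
  qed
  have m2: "(\<lambda>z. max 0 (a (fst z - snd z))) \<in> borel_measurable (lebesgue_on (\<Omega> \<times> \<Omega>))"
  proof (rule borel_on_lebesgue)
    have "(\<lambda>z::'a\<times>'a. fst z - snd z) \<in> borel_measurable borel"
      by (intro borel_measurable_continuous_onI continuous_intros)
    then have "(\<lambda>z::'a\<times>'a. a (fst z - snd z)) \<in> borel_measurable borel"
      using measurable_compose[OF _ a] by blast
    then show "(\<lambda>z::'a\<times>'a. max 0 (a (fst z - snd z))) \<in> borel_measurable borel"
      by (intro borel_measurable_max) auto
  qed
  show ?thesis unfolding psiF_def using m1 m2 unfolding e by (rule borel_measurable_times)
qed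

lemma sn_tri:
  fixes \<Omega> :: "'a::euclidean_space set"
  assumes O: "open \<Omega>" and g: "goodpsi (lebesgue_on (\<Omega>\<times>\<Omega>)) (psiF \<phi> a)"
    and C1: "cond_C1 \<Omega> \<phi>" and pm: "pm \<ge> 1" and a: "a \<in> borel_measurable borel"
    and u: "u \<in> Lp_loc_space \<Omega> pm" and v: "v \<in> Lp_loc_space \<Omega> pm"
  shows "Lux (lebesgue_on (\<Omega>\<times>\<Omega>)) (psiF \<phi> a) (DD (\<lambda>x. u x + v x)) \<le>
    Lux (lebesgue_on (\<Omega>\<times>\<Omega>)) (psiF \<phi> a) (DD u) + Lux (lebesgue_on (\<Omega>\<times>\<Omega>)) (psiF \<phi> a) (DD v)"
proof (rule lux_triangle[OF g DD_nonneg DD_nonneg])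
  show "AE z in lebesgue_on (\<Omega> \<times> \<Omega>). 0 \<le> DD (\<lambda>x. u x + v x) z \<and> DD (\<lambda>x. u x + v x) z \<le> DD u z + DD v z"
  proof (intro AE_I2 conjI)
    fix z :: "'a \<times> 'a"
    show "0 \<le> DD (\<lambda>x. u x + v x) z" by (rule DD_nonneg)
    have "u (fst z) + v (fst z) - (u (snd z) + v (snd z)) = (u (fst z) - u (snd z)) + (v (fst z) - v (snd z))"
      by simp
    then show "DD (\<lambda>x. u x + v x) z \<le> DD u z + DD v z"
      unfolding DD_def by (metis norm_triangle_ineq)
  qed
  show "\<And>l. 0 < l \<Longrightarrow> (\<lambda>z. psiF \<phi> a (DD u z / l) z) \<in> borel_measurable (lebesgue_on (\<Omega> \<times> \<Omega>))"
    by (rule psiF_meas[OF O C1 pm a u])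
  show "\<And>l. 0 < l \<Longrightarrow> (\<lambda>z. psiF \<phi> a (DD v z / l) z) \<in> borel_measurable (lebesgue_on (\<Omega> \<times> \<Omega>))"
    by (rule psiF_meas[OF O C1 pm a v])
qed

lemma sn_scale:
  fixes \<Omega> :: "'a::euclidean_space set"
  assumes g: "goodpsi (lebesgue_on (\<Omega>\<times>\<Omega>)) (psiF \<phi> a)"
  shows "Lux (lebesgue_on (\<Omega>\<times>\<Omega>)) (psiF \<phi> a) (DD (\<lambda>x. c * u x)) =
    ennreal (cmod c) * Lux (lebesgue_on (\<Omega>\<times>\<Omega>)) (psiF \<phi> a) (DD u)"
proof (cases "c = 0")
  case True
  have "Lux (lebesgue_on (\<Omega>\<times>\<Omega>)) (psiF \<phi> a) (DD (\<lambda>x. c * u x)) = 0"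
    using True by (intro lux_zero[OF g] AE_I2) (simp add: DD_def)
  then show ?thesis using True by simp
next
  case False
  have e: "DD (\<lambda>x. c * u x) = (\<lambda>z. cmod c * DD u z)"
  proof
    fix z
    have "c * u (fst z) - c * u (snd z) = c * (u (fst z) - u (snd z))" by (simp add: algebra_simps)
    then show "DD (\<lambda>x. c * u x) z = cmod c * DD u z" unfolding DD_def by (simp add: norm_mult)
  qed
  show ?thesis unfolding e using False by (intro lux_scale[OF g DD_nonneg]) simp
qed

lemma sn_cong:
  fixes \<Omega> :: "'a::euclidean_space set"
  assumes O: "open \<Omega>" and e: "AE x in lebesgue_on \<Omega>. u x = v x"
  shows "Lux (lebesgue_on (\<Omega>\<times>\<Omega>)) \<psi> (DD u) = Lux (lebesgue_on (\<Omega>\<times>\<Omega>)) \<psi> (DD v)"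
proof (rule lux_cong_AE)
  show "AE z in lebesgue_on (\<Omega> \<times> \<Omega>). DD u z = DD v z"
    using AE_pair_lift[OF O e] by (rule eventually_mono) (simp add: DD_def)
qed

lemma sn_zero:
  fixes \<Omega> :: "'a::euclidean_space set"
  assumes O: "open \<Omega>" and g: "goodpsi (lebesgue_on (\<Omega>\<times>\<Omega>)) (psiF \<phi> a)"
    and e: "AE x in lebesgue_on \<Omega>. u x = 0"
  shows "Lux (lebesgue_on (\<Omega>\<times>\<Omega>)) (psiF \<phi> a) (DD u) = 0"
proof (rule lux_zero[OF g])
  show "AE z in lebesgue_on (\<Omega> \<times> \<Omega>). DD u z = 0"
    using AE_pair_lift[OF O e] by (rule eventually_mono) (simp add: DD_def)
qed

lemma fst_borel: "(\<lambda>z::'a::euclidean_space\<times>'a. fst z) \<in> borel_measurable borel"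
  by (intro borel_measurable_continuous_onI continuous_intros)
lemma snd_borel: "(\<lambda>z::'a::euclidean_space\<times>'a. snd z) \<in> borel_measurable borel"
  by (intro borel_measurable_continuous_onI continuous_intros)
lemma diff_borel: "(\<lambda>z::'a::euclidean_space\<times>'a. fst z - snd z) \<in> borel_measurable borel"
  by (intro borel_measurable_continuous_onI continuous_intros)

lemma DD_powr_bound:
  fixes w :: "'a \<Rightarrow> complex"
  assumes p: "p \<ge> 1"
  shows "DD w z powr p \<le> 2 powr p * (cmod (w (fst z)) powr p + cmod (w (snd z)) powr p)"
proof -
  define m where "m = max (cmod (w (fst z))) (cmod (w (snd z)))"
  have "DD w z \<le> cmod (w (fst z)) + cmod (w (snd z))" unfolding DD_def by (rule norm_triangle_ineq4)
  also have "\<dots> \<le> 2 * m" unfolding m_def by simp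
  finally have "DD w z powr p \<le> (2 * m) powr p" using p DD_nonneg[of w z] by (intro powr_mono2) auto
  also have "\<dots> = 2 powr p * m powr p" by (simp add: powr_mult)
  also have "m powr p \<le> cmod (w (fst z)) powr p + cmod (w (snd z)) powr p"
    unfolding m_def by (simp add: max_def)
  then have "2 powr p * m powr p \<le> 2 powr p * (cmod (w (fst z)) powr p + cmod (w (snd z)) powr p)"
    by (intro mult_left_mono) auto
  finally show ?thesis .
qed

lemma K_bound:
  fixes \<Omega> :: "'a::euclidean_space set" and w :: "'a \<Rightarrow> complex"
  assumes O: "open \<Omega>" and w[measurable]: "w \<in> borel_measurable borel" and p: "p \<ge> 1"
    and a[measurable]: "a \<in> borel_measurable borel"
  shows "(\<integral>\<^sup>+z. ennreal (DD w z powr p * max 0 (a (fst z - snd z))) \<partial>lebesgue_on (\<Omega>\<times>\<Omega>))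
    \<le> ennreal (2 powr p) * (2 * ((\<integral>\<^sup>+x. ennreal (cmod (w x) powr p) \<partial>lebesgue_on \<Omega>) * (\<integral>\<^sup>+y. ennreal (a y) \<partial>lborel)))"
proof -
  have OOl: "\<Omega> \<times> \<Omega> \<in> sets (lebesgue :: ('a\<times>'a) measure)" using O by (simp add: open_Times)
  have Ob: "\<Omega> \<in> sets borel" using O by simp
  define g where "g x = cmod (w x) powr p * indicator \<Omega> x" for x
  have gb: "g \<in> borel_measurable borel" unfolding g_def using Ob by measurable
  have gnn: "g x \<ge> 0" for x unfolding g_def by simp
  have gf: "(\<lambda>z::'a\<times>'a. g (fst z)) \<in> borel_measurable borel" using measurable_compose[OF fst_borel gb] .
  have gs: "(\<lambda>z::'a\<times>'a. g (snd z)) \<in> borel_measurable borel" using measurable_compose[OF snd_borel gb] .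
  have ad: "(\<lambda>z::'a\<times>'a. a (fst z - snd z)) \<in> borel_measurable borel" using measurable_compose[OF diff_borel a] .
  have "(\<integral>\<^sup>+z. ennreal (DD w z powr p * max 0 (a (fst z - snd z))) \<partial>lebesgue_on (\<Omega>\<times>\<Omega>))
     = (\<integral>\<^sup>+z. ennreal (DD w z powr p * max 0 (a (fst z - snd z))) * indicator (\<Omega>\<times>\<Omega>) z \<partial>lebesgue)"
    using OOl by (simp add: nn_integral_restrict_space)
  also have "\<dots> \<le> (\<integral>\<^sup>+z. ennreal (2 powr p) * (ennreal (g (fst z)) * ennreal (a (fst z - snd z)) +
        ennreal (g (snd z)) * ennreal (a (fst z - snd z))) \<partial>lebesgue)"
  proof (intro nn_integral_mono)
    fix z :: "'a \<times> 'a"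
    show "ennreal (DD w z powr p * max 0 (a (fst z - snd z))) * indicator (\<Omega>\<times>\<Omega>) z \<le>
      ennreal (2 powr p) * (ennreal (g (fst z)) * ennreal (a (fst z - snd z)) +
        ennreal (g (snd z)) * ennreal (a (fst z - snd z)))"
    proof (cases "z \<in> \<Omega> \<times> \<Omega>")
      case False then show ?thesis by simp
    next
      case True
      then have z: "fst z \<in> \<Omega>" "snd z \<in> \<Omega>" by (auto simp: mem_Times_iff)
      have "DD w z powr p * max 0 (a (fst z - snd z)) \<le>
          (2 powr p * (g (fst z) + g (snd z))) * max 0 (a (fst z - snd z))"
        using DD_powr_bound[OF p, of w z] z unfolding g_def by (intro mult_right_mono) auto
      then have "ennreal (DD w z powr p * max 0 (a (fst z - snd z))) \<le>
          ennreal ((2 powr p * (g (fst z) + g (snd z))) * max 0 (a (fst z - snd z)))"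
        by (rule ennreal_leI)
      also have "\<dots> = ennreal (2 powr p) * (ennreal (g (fst z)) * ennreal (a (fst z - snd z)) +
        ennreal (g (snd z)) * ennreal (a (fst z - snd z)))"
      proof -
        have "ennreal ((2 powr p * (g (fst z) + g (snd z))) * max 0 (a (fst z - snd z))) =
          ennreal (2 powr p * (g (fst z) + g (snd z))) * ennreal (max 0 (a (fst z - snd z)))"
          using gnn by (intro ennreal_mult) auto
        also have "\<dots> = (ennreal (2 powr p) * (ennreal (g (fst z)) + ennreal (g (snd z)))) * ennreal (a (fst z - snd z))"
          using gnn by (simp add: ennreal_mult ennreal_plus ennreal_max_0)
        finally show ?thesis by (simp add: algebra_simps)
      qed
      finally show ?thesis using True by simp
    qed
  qed
  also have "\<dots> = (\<integral>\<^sup>+z. ennreal (2 powr p) * (ennreal (g (fst z)) * ennreal (a (fst z - snd z)) +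
        ennreal (g (snd z)) * ennreal (a (fst z - snd z))) \<partial>lborel)"
    by (rule nn_integral_completion)
  also have "\<dots> = ennreal (2 powr p) * ((\<integral>\<^sup>+z. ennreal (g (fst z)) * ennreal (a (fst z - snd z)) \<partial>lborel) +
        (\<integral>\<^sup>+z. ennreal (g (snd z)) * ennreal (a (fst z - snd z)) \<partial>lborel))"
    using gf gs ad by (simp add: nn_integral_cmult nn_integral_add)
  also have "\<dots> = ennreal (2 powr p) * (2 * ((\<integral>\<^sup>+x. ennreal (g x) \<partial>lborel) * (\<integral>\<^sup>+y. ennreal (a y) \<partial>lborel)))"
    using tonelli_fst[OF a gb] tonelli_snd[OF a gb] by (simp add: mult_2)
  also have "(\<integral>\<^sup>+x. ennreal (g x) \<partial>lborel) = (\<integral>\<^sup>+x. ennreal (cmod (w x) powr p) \<partial>lebesgue_on \<Omega>)"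
  proof -
    have "(\<integral>\<^sup>+x. ennreal (g x) \<partial>lborel) = (\<integral>\<^sup>+x. ennreal (g x) \<partial>lebesgue)"
      by (rule nn_integral_completion[symmetric])
    also have "\<dots> = (\<integral>\<^sup>+x. ennreal (cmod (w x) powr p) * indicator \<Omega> x \<partial>lebesgue)"
      unfolding g_def by (intro nn_integral_cong) (simp split: split_indicator)
    also have "\<dots> = (\<integral>\<^sup>+x. ennreal (cmod (w x) powr p) \<partial>lebesgue_on \<Omega>)"
      using Ob by (simp add: nn_integral_restrict_space)
    finally show ?thesis .
  qed
  finally show ?thesis .
qed

lemma borel_version:
  fixes \<Omega> :: "'a::euclidean_space set" and u :: "'a \<Rightarrow> complex"
  assumes O: "open \<Omega>" and u: "u \<in> borel_measurable (lebesgue_on \<Omega>)"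
  obtains u' where "u' \<in> borel_measurable borel" "AE x in lebesgue_on \<Omega>. u x = u' x"
proof -
  have Ol: "\<Omega> \<in> sets lebesgue" using O by simp
  define ue where "ue x = (if x \<in> \<Omega> then u x else 0)" for x
  have ue: "ue \<in> borel_measurable lebesgue"
    unfolding ue_def using measurable_restrict_space_iff[of \<Omega> lebesgue 0 borel u] Ol u by simp
  have r: "(\<lambda>x. Re (ue x)) \<in> borel_measurable (completion lborel)" using ue by measurable
  have i: "(\<lambda>x. Im (ue x)) \<in> borel_measurable (completion lborel)" using ue by measurable
  obtain g1 where g1: "g1 \<in> borel_measurable lborel" "AE x in lborel. Re (ue x) = g1 x"
    using completion_ex_borel_measurable_real[OF r] by blast
  obtain g2 where g2: "g2 \<in> borel_measurable lborel" "AE x in lborel. Im (ue x) = g2 x"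
    using completion_ex_borel_measurable_real[OF i] by blast
  define u' where "u' x = complex_of_real (g1 x) + \<i> * complex_of_real (g2 x)" for x
  have g1b: "g1 \<in> borel_measurable borel" and g2b: "g2 \<in> borel_measurable borel" using g1 g2 by auto
  have "u' \<in> borel_measurable borel" unfolding u'_def using g1b g2b by measurable
  moreover have "AE x in lborel. ue x = u' x"
    using g1(2) g2(2) by eventually_elim (auto simp: u'_def complex_eq_iff)
  then have "AE x in lebesgue. ue x = u' x" by (rule AE_completion)
  then have "AE x in lebesgue_on \<Omega>. u x = u' x"
    using Ol by (subst AE_restrict_space_iff) (auto elim!: eventually_mono simp: ue_def)
  ultimately show ?thesis using that by blast
qed

lemma Lp_integral_from_norm:
  assumes "Lp_norm S p u = ennreal N" "N \<ge> 0" "p > 0"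
  shows "Lp_integral S p u = ennreal (N powr p)"
proof -
  have nt: "Lp_integral S p u \<noteq> top" using assms unfolding Lp_norm_def by (auto split: if_splits)
  then obtain i where i: "Lp_integral S p u = ennreal i" "i \<ge> 0" by (cases "Lp_integral S p u") auto
  then have "ennreal (i powr (1/p)) = ennreal N" using assms nt unfolding Lp_norm_def by simp
  then have "i powr (1/p) = N" using assms(2) by (simp add: ennreal_inj)
  then have "N powr p = i" using i assms(3) by (auto simp: powr_powr)
  then show ?thesis using i by simp
qed

lemma DD_borel:
  fixes w :: "'a::euclidean_space \<Rightarrow> complex"
  assumes w: "w \<in> borel_measurable borel"
  shows "DD w \<in> borel_measurable borel"
proof -
  have "(\<lambda>z::'a\<times>'a. w (fst z)) \<in> borel_measurable borel" using measurable_compose[OF fst_borel w] .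
  moreover have "(\<lambda>z::'a\<times>'a. w (snd z)) \<in> borel_measurable borel" using measurable_compose[OF snd_borel w] .
  ultimately show ?thesis unfolding DD_def[abs_def] by measurable
qed

lemma J_bound:
  fixes \<Omega> :: "'a::euclidean_space set" and u :: "'a \<Rightarrow> complex"
  assumes O: "open \<Omega>" and u[measurable]: "u \<in> borel_measurable borel" and p: "p \<ge> 1" "p \<le> pp"
    and a[measurable]: "a \<in> borel_measurable borel" and Ar: "(\<integral>\<^sup>+y. ennreal (a y) \<partial>lborel) = ennreal Ar" "Ar \<ge> 0"
    and K0: "K0 \<ge> 1" and l: "l > 0" and I: "Lp_integral \<Omega> p u = ennreal (N powr p)"
    and N: "0 \<le> N" "N \<le> R" "K0 * R \<le> l"
  shows "(\<integral>\<^sup>+z. ennreal ((DD u z / l) powr p * max 0 (a (fst z - snd z))) \<partial>lebesgue_on (\<Omega>\<times>\<Omega>))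
    \<le> ennreal (2 powr pp * 2 * Ar / K0)"
proof -
  have Ol: "\<Omega> \<in> sets lebesgue" using O by simp
  define w where "w x = u x / complex_of_real l" for x
  have wb: "w \<in> borel_measurable borel" unfolding w_def by measurable
  have e: "DD w z = DD u z / l" for z
    unfolding DD_def w_def using l by (simp add: diff_divide_distrib[symmetric] norm_divide)
  have Iw: "(\<integral>\<^sup>+x. ennreal (cmod (w x) powr p) \<partial>lebesgue_on \<Omega>) = ennreal ((N / l) powr p)"
  proof -
    have "(\<integral>\<^sup>+x. ennreal (cmod (w x) powr p) \<partial>lebesgue_on \<Omega>) =
        (\<integral>\<^sup>+x. ennreal (1 / l powr p) * ennreal (cmod (u x) powr p) \<partial>lebesgue_on \<Omega>)"
      unfolding w_def using l by (intro nn_integral_cong) (simp add: norm_divide powr_divide ennreal_mult[symmetric])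
    also have "\<dots> = ennreal (1 / l powr p) * Lp_integral \<Omega> p u"
    proof -
      have um: "(\<lambda>x. ennreal (cmod (u x) powr p)) \<in> borel_measurable (lebesgue_on \<Omega>)"
        by (rule borel_on_lebesgue) measurable
      show ?thesis unfolding Lp_integral_restrict[OF Ol] by (rule nn_integral_cmult[OF um])
    qed
    also have "\<dots> = ennreal ((N / l) powr p)"
      unfolding I using l N by (simp add: ennreal_mult[symmetric] powr_divide)
    finally show ?thesis .
  qed
  have "(\<integral>\<^sup>+z. ennreal ((DD u z / l) powr p * max 0 (a (fst z - snd z))) \<partial>lebesgue_on (\<Omega>\<times>\<Omega>))
      \<le> ennreal (2 powr p) * (2 * (ennreal ((N / l) powr p) * ennreal Ar))"
    using K_bound[OF O wb p(1) a] unfolding e Iw Ar by simp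
  also have "\<dots> = ennreal (2 powr p * (2 * ((N / l) powr p * Ar)))"
    using Ar by (simp add: ennreal_mult)
  also have "\<dots> \<le> ennreal (2 powr pp * 2 * Ar / K0)"
  proof (rule ennreal_leI)
    have R: "R \<ge> 0" using N by simp
    have "N / l \<le> R / l" using N l by (simp add: divide_right_mono)
    also have "R / l \<le> 1 / K0" using N K0 l by (simp add: field_simps)
    finally have q: "N / l \<le> 1 / K0" .
    have q1: "N / l \<le> 1" using q K0 by (smt (verit) divide_le_eq_1)
    have "(N / l) powr p \<le> (N / l) powr 1" using p q1 N l by (intro powr_mono') auto
    also have "\<dots> = N / l" using N l by simp
    finally have qp: "(N / l) powr p \<le> 1 / K0" using q by simp
    have tp: "2 powr p \<le> 2 powr pp" using p by (intro powr_mono) auto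
    have "2 powr p * (2 * ((N / l) powr p * Ar)) \<le> 2 powr pp * (2 * ((1 / K0) * Ar))"
      using tp qp Ar(2) by (intro mult_mono mult_left_mono mult_right_mono) auto
    then show "2 powr p * (2 * ((N / l) powr p * Ar)) \<le> 2 powr pp * 2 * Ar / K0" by simp
  qed
  finally show ?thesis .
qed

lemma embed_bound:
  fixes \<Omega> :: "'a::euclidean_space set" and u :: "'a \<Rightarrow> complex"
  assumes O: "open \<Omega>" and phi_nonneg: "\<forall>t\<ge>0. \<forall>x\<in>\<Omega>. \<forall>y\<in>\<Omega>. \<phi> t x y \<ge> 0"
    and C3: "cond_C3 \<Omega> \<phi> pm pp \<beta>" and C4: "cond_C4 \<Omega> \<phi> c1"
    and a: "a \<in> borel_measurable borel" and Ar: "(\<integral>\<^sup>+y. ennreal (a y) \<partial>lborel) = ennreal Ar" "Ar \<ge> 0"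
    and K0: "K0 \<ge> 1" "\<beta> * c1 * (2 * (2 powr pp * 2 * Ar)) \<le> K0"
    and u: "u \<in> borel_measurable (lebesgue_on \<Omega>)"
    and A: "Lp_norm \<Omega> pp u = ennreal A" "A \<ge> 0" and B: "Lp_norm \<Omega> pm u = ennreal B" "B \<ge> 0"
  shows "seminorm_p \<Omega> \<phi> a u \<le> ennreal (K0 * (A + B))"
proof -
  have Ol: "\<Omega> \<in> sets lebesgue" using O by simp
  have b: "\<beta> \<ge> 1" "c1 > 0" "pm > 1" "pp \<ge> pm" using C3 C4 unfolding cond_C3_def cond_C4_def by auto
  obtain u' where u'b: "u' \<in> borel_measurable borel" and uu': "AE x in lebesgue_on \<Omega>. u x = u' x"
    using borel_version[OF O u] by blast
  have u'm: "u' \<in> borel_measurable (lebesgue_on \<Omega>)" by (rule borel_on_lebesgue[OF u'b])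
  have Ipp: "Lp_integral \<Omega> pp u' = ennreal (A powr pp)"
    using Lp_cong[OF Ol _ _ u u'm uu', of pp] b A by (intro Lp_integral_from_norm) auto
  have Ipm: "Lp_integral \<Omega> pm u' = ennreal (B powr pm)"
    using Lp_cong[OF Ol _ _ u u'm uu', of pm] b B by (intro Lp_integral_from_norm) auto
  have "seminorm_p \<Omega> \<phi> a u = Lux (lebesgue_on (\<Omega>\<times>\<Omega>)) (psiF \<phi> a) (DD u')"
    unfolding seminorm_eq[OF O phi_nonneg] by (rule sn_cong[OF O uu'])
  also have "\<dots> \<le> ennreal (K0 * (A + B))"
  proof (rule lux_le_eps)
    show "0 \<le> K0 * (A + B)" using K0 A B by simp
    fix e :: real assume e: "e > 0"
    define l where "l = K0 * (A + B) + e"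
    have KAB: "0 \<le> K0 * (A + B)" using K0 A B by simp
    have l: "l > 0" "K0 * (A + B) \<le> l" unfolding l_def using e KAB by auto
    have DDb: "DD u' \<in> borel_measurable borel" by (rule DD_borel[OF u'b])
    have ad: "(\<lambda>z::'a\<times>'a. a (fst z - snd z)) \<in> borel_measurable borel" using measurable_compose[OF diff_borel a] .
    have mJ: "(\<lambda>z. ennreal ((DD u' z / l) powr q * max 0 (a (fst z - snd z)))) \<in> borel_measurable (lebesgue_on (\<Omega>\<times>\<Omega>))" for q
      by (rule borel_on_lebesgue) (use DDb ad in measurable)
    define J where "J q = (\<integral>\<^sup>+z. ennreal ((DD u' z / l) powr q * max 0 (a (fst z - snd z))) \<partial>lebesgue_on (\<Omega>\<times>\<Omega>))" for q
    have Jpm: "J pm \<le> ennreal (2 powr pp * 2 * Ar / K0)" unfolding J_def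
      using b A B l by (intro J_bound[OF O u'b _ _ a Ar K0(1) l(1) Ipm]) auto
    have Jpp: "J pp \<le> ennreal (2 powr pp * 2 * Ar / K0)" unfolding J_def
      using b A B l by (intro J_bound[OF O u'b _ _ a Ar K0(1) l(1) Ipp]) auto
    have "Modf (lebesgue_on (\<Omega>\<times>\<Omega>)) (psiF \<phi> a) (\<lambda>z. DD u' z / (K0 * (A + B) + e)) \<le>
        (\<integral>\<^sup>+z. ennreal (\<beta> * c1) * ennreal ((DD u' z / l) powr pm * max 0 (a (fst z - snd z))) +
           ennreal (\<beta> * c1) * ennreal ((DD u' z / l) powr pp * max 0 (a (fst z - snd z))) \<partial>lebesgue_on (\<Omega>\<times>\<Omega>))"
      unfolding Modf_def l_def[symmetric]
    proof (rule nn_integral_mono_AE)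
      show "AE z in lebesgue_on (\<Omega>\<times>\<Omega>). ennreal (psiF \<phi> a (DD u' z / l) z) \<le>
          ennreal (\<beta> * c1) * ennreal ((DD u' z / l) powr pm * max 0 (a (fst z - snd z))) +
          ennreal (\<beta> * c1) * ennreal ((DD u' z / l) powr pp * max 0 (a (fst z - snd z)))"
        using phi_bound[OF C3 C4]
      proof eventually_elim
        case (elim z)
        define t where "t = DD u' z / l"
        have t: "t \<ge> 0" unfolding t_def using l DD_nonneg[of u' z] by simp
        define M where "M = max 0 (a (fst z - snd z))"
        have M: "M \<ge> 0" unfolding M_def by simp
        have "psiF \<phi> a t z \<le> (\<beta> * c1 * (t powr pm + t powr pp)) * M"
          unfolding psiF_def M_def[symmetric] using elim t M by (intro mult_right_mono) auto
        also have "\<dots> = \<beta> * c1 * (t powr pm * M) + \<beta> * c1 * (t powr pp * M)" by (simp add: algebra_simps)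
        finally have "ennreal (psiF \<phi> a t z) \<le> ennreal (\<beta> * c1 * (t powr pm * M) + \<beta> * c1 * (t powr pp * M))"
          by (rule ennreal_leI)
        also have "\<dots> = ennreal (\<beta> * c1) * ennreal (t powr pm * M) + ennreal (\<beta> * c1) * ennreal (t powr pp * M)"
          using b M by (subst ennreal_plus) (auto simp: ennreal_mult)
        finally show ?case unfolding t_def M_def .
      qed
    qed
    also have "\<dots> = ennreal (\<beta> * c1) * J pm + ennreal (\<beta> * c1) * J pp"
      unfolding J_def using mJ by (simp add: nn_integral_add nn_integral_cmult)
    also have "\<dots> \<le> ennreal (\<beta> * c1) * ennreal (2 powr pp * 2 * Ar / K0) + ennreal (\<beta> * c1) * ennreal (2 powr pp * 2 * Ar / K0)"
      by (intro add_mono mult_left_mono Jpm Jpp) auto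
    also have "\<dots> = ennreal (\<beta> * c1 * (2 * (2 powr pp * 2 * Ar)) / K0)"
      using b Ar K0 by (simp add: ennreal_mult[symmetric] ennreal_plus[symmetric] del: ennreal_plus)
    also have "\<dots> \<le> 1"
      using K0 by (simp add: divide_le_eq_1)
    finally show "Modf (lebesgue_on (\<Omega>\<times>\<Omega>)) (psiF \<phi> a) (\<lambda>z. DD u' z / (K0 * (A + B) + e)) \<le> 1" .
  qed
  finally show ?thesis .
qed

lemma geom_le2: "(\<Sum>k<n. (1/2::real)^k) \<le> 2"
proof -
  have "(\<Sum>k<n. (1/2::real)^k) \<le> suminf (\<lambda>k. (1/2::real)^k)"
    by (rule sum_le_suminf) (auto intro: summable_geometric)
  also have "\<dots> = 2" by (subst suminf_geometric) auto
  finally show ?thesis .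
qed

lemma lp_complete_limit:
  fixes \<Omega> :: "'a::euclidean_space set" and V :: "nat \<Rightarrow> 'a \<Rightarrow> complex"
  assumes Ol: "\<Omega> \<in> sets lebesgue" and p: "p \<ge> 1"
    and V: "\<And>k. V k \<in> borel_measurable (lebesgue_on \<Omega>)"
    and small: "\<And>k. Lp_norm \<Omega> p (\<lambda>x. V (Suc k) x - V k x) < ennreal ((1/2)^k)"
  shows "AE x in lebesgue_on \<Omega>. convergent (\<lambda>k. V k x)"
proof -
  have p0: "p > 0" using p by simp
  let ?M = "lebesgue_on \<Omega>"
  let ?L = "Lux ?M (\<lambda>t z. t powr p)"
  define d where "d k x = V (Suc k) x - V k x" for k x
  have dm: "d k \<in> borel_measurable ?M" for k unfolding d_def using V by measurable
  define G where "G n x = (\<Sum>k<n. cmod (d k x))" for n x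
  have Gm: "G n \<in> borel_measurable ?M" for n unfolding G_def using dm by measurable
  have Gnn: "G n x \<ge> 0" for n x unfolding G_def by (simp add: sum_nonneg)
  have LG: "?L (G n) \<le> ennreal (\<Sum>k<n. (1/2)^k)" for n
  proof (induction n)
    case 0
    have "?L (G 0) = 0" unfolding G_def by (intro lux_zero[OF goodpsi_powr[OF p]]) simp
    then show ?case by simp
  next
    case (Suc n)
    have "?L (G (Suc n)) \<le> ?L (G n) + ?L (\<lambda>x. cmod (d n x))"
    proof (rule lux_triangle[OF goodpsi_powr[OF p] Gnn])
      show "AE z in ?M. 0 \<le> G (Suc n) z \<and> G (Suc n) z \<le> G n z + cmod (d n z)"
        unfolding G_def by (intro AE_I2) (simp add: sum_nonneg)
      show "\<And>l. 0 < l \<Longrightarrow> (\<lambda>z. (G n z / l) powr p) \<in> borel_measurable ?M" using Gm by measurable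
      show "\<And>l. 0 < l \<Longrightarrow> (\<lambda>z. (cmod (d n z) / l) powr p) \<in> borel_measurable ?M" using dm by measurable
    qed simp
    also have "?L (\<lambda>x. cmod (d n x)) = Lp_norm \<Omega> p (d n)" by (rule Lp_norm_lux[OF Ol p0 dm, symmetric])
    also have "\<dots> \<le> ennreal ((1/2)^n)" using small[of n] unfolding d_def by simp
    finally have "?L (G (Suc n)) \<le> ?L (G n) + ennreal ((1/2)^n)" by simp
    also have "\<dots> \<le> ennreal (\<Sum>k<n. (1/2)^k) + ennreal ((1/2)^n)" using Suc by (rule add_right_mono)
    also have "\<dots> = ennreal (\<Sum>k<Suc n. (1/2)^k)" by (simp add: ennreal_plus sum_nonneg)
    finally show ?case .
  qed
  have M1: "Modf ?M (\<lambda>t z. t powr p) (\<lambda>x. G n x / 3) \<le> 1" for n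
  proof (rule lux_lt[OF goodpsi_powr[OF p] Gnn])
    have "?L (G n) \<le> ennreal 2" using LG[of n] geom_le2[of n] by (meson ennreal_leI order_trans)
    also have "\<dots> < ennreal 3" by simp
    finally show "?L (G n) < ennreal 3" .
  qed
  define f where "f n x = ennreal ((G n x / 3) powr p)" for n x
  have fm: "f n \<in> borel_measurable ?M" for n unfolding f_def using Gm by measurable
  have finc: "incseq f"
  proof (intro incseq_SucI le_funI)
    fix n x
    have "G n x \<le> G (Suc n) x" unfolding G_def by simp
    then show "f n x \<le> f (Suc n) x" unfolding f_def using p Gnn[of n x]
      by (intro ennreal_leI powr_mono2) auto
  qed
  have "(\<integral>\<^sup>+ x. (SUP n. f n x) \<partial>?M) = (SUP n. integral\<^sup>N ?M (f n))"
    by (rule nn_integral_monotone_convergence_SUP[OF finc fm])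
  also have "\<dots> \<le> 1" using M1 unfolding Modf_def f_def by (simp add: SUP_le_iff)
  finally have "(\<integral>\<^sup>+ x. (SUP n. f n x) \<partial>?M) \<noteq> \<infinity>" by (auto simp: top_unique)
  then have AEf: "AE x in ?M. (SUP n. f n x) \<noteq> \<infinity>"
    by (intro nn_integral_PInf_AE) (use fm in measurable)
  show ?thesis using AEf
  proof eventually_elim
    case (elim x)
    then obtain R where R: "(SUP n. f n x) = ennreal R" "R \<ge> 0"
      by (cases "(SUP n. f n x)") auto
    have bG: "G n x \<le> 3 * R powr (1/p)" for n
    proof -
      have "f n x \<le> ennreal R" using R by (metis SUP_upper UNIV_I)
      then have "(G n x / 3) powr p \<le> R" unfolding f_def using R by (simp add: ennreal_le_iff)
      then have "((G n x / 3) powr p) powr (1/p) \<le> R powr (1/p)" using p by (intro powr_mono2) auto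
      then have "G n x / 3 \<le> R powr (1/p)" using p Gnn[of n x] by (simp add: powr_powr)
      then show ?thesis by simp
    qed
    have sm: "summable (\<lambda>k. cmod (d k x))"
    proof (rule bounded_imp_summable)
      fix n show "(\<Sum>k\<le>n. cmod (d k x)) \<le> 3 * R powr (1/p)"
        using bG[of "Suc n"] unfolding G_def by (simp add: lessThan_Suc_atMost)
    qed simp
    then have "summable (\<lambda>k. d k x)" by (rule summable_norm_cancel)
    then have "(\<lambda>n. \<Sum>k<n. d k x) \<longlonglongrightarrow> suminf (\<lambda>k. d k x)" by (rule summable_LIMSEQ)
    moreover have "(\<Sum>k<n. d k x) = V n x - V 0 x" for n
      unfolding d_def by (rule sum_lessThan_telescope)
    ultimately have "(\<lambda>n. V n x - V 0 x) \<longlonglongrightarrow> suminf (\<lambda>k. d k x)" by simp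
    then have "(\<lambda>n. (V n x - V 0 x) + V 0 x) \<longlonglongrightarrow> suminf (\<lambda>k. d k x) + V 0 x"
      by (intro tendsto_intros)
    then show ?case unfolding convergent_def by auto
  qed
qed

lemma completeness:
  fixes \<Omega> :: "'a::euclidean_space set" and U :: "nat \<Rightarrow> 'a \<Rightarrow> complex"
  assumes O: "open \<Omega>" and phi_nonneg: "\<forall>t\<ge>0. \<forall>x\<in>\<Omega>. \<forall>y\<in>\<Omega>. \<phi> t x y \<ge> 0"
    and g: "goodpsi (lebesgue_on (\<Omega>\<times>\<Omega>)) (psiF \<phi> a)"
    and C1: "cond_C1 \<Omega> \<phi>" and pm: "pm \<ge> 1" and ab: "a \<in> borel_measurable borel"
    and add: "\<And>u v. u \<in> Lspace \<Omega> \<phi> a pm \<Longrightarrow> v \<in> Lspace \<Omega> \<phi> a pm \<Longrightarrow> (\<lambda>x. u x + v x) \<in> Lspace \<Omega> \<phi> a pm"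
    and scl: "\<And>u c. u \<in> Lspace \<Omega> \<phi> a pm \<Longrightarrow> (\<lambda>x. c * u x) \<in> Lspace \<Omega> \<phi> a pm"
    and U: "\<And>n. U n \<in> Lspace \<Omega> \<phi> a pm"
    and cauchy: "\<forall>e>0. \<exists>N. \<forall>m\<ge>N. \<forall>n\<ge>N. fnorm \<Omega> \<phi> a pm (\<lambda>x. U m x - U n x) < ennreal e"
  shows "\<exists>u\<in>Lspace \<Omega> \<phi> a pm. (\<lambda>n. fnorm \<Omega> \<phi> a pm (\<lambda>x. U n x - u x)) \<longlonglongrightarrow> 0"
proof -
  have Ol: "\<Omega> \<in> sets lebesgue" using O by simp
  have p0: "pm > 0" using pm by simp
  let ?LF = "Lux (lebesgue_on (\<Omega>\<times>\<Omega>)) (psiF \<phi> a)"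
  have fn: "fnorm \<Omega> \<phi> a pm w = ?LF (DD w) + Lp_norm \<Omega> pm w" for w
    unfolding fnorm_def seminorm_eq[OF O phi_nonneg] ..
  have Lm: "w \<in> borel_measurable (lebesgue_on \<Omega>)" if "w \<in> Lspace \<Omega> \<phi> a pm" for w
    using that unfolding Lspace_def Lp_loc_space_def by auto
  have Ll: "w \<in> Lp_loc_space \<Omega> pm" if "w \<in> Lspace \<Omega> \<phi> a pm" for w
    using that unfolding Lspace_def by auto
  have diffL: "(\<lambda>x. v x - w x) \<in> Lspace \<Omega> \<phi> a pm"
    if "v \<in> Lspace \<Omega> \<phi> a pm" "w \<in> Lspace \<Omega> \<phi> a pm" for v w
  proof -
    have "(\<lambda>x. v x + (-1) * w x) \<in> Lspace \<Omega> \<phi> a pm" using add[OF that(1) scl[OF that(2)]] .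
    then show ?thesis by simp
  qed
  have "\<exists>N. e > 0 \<longrightarrow> (\<forall>m\<ge>N. \<forall>n\<ge>N. fnorm \<Omega> \<phi> a pm (\<lambda>x. U m x - U n x) < ennreal e)" for e
    using cauchy by (cases "e > 0") auto
  then obtain Nf where Nf: "\<And>e m n. e > 0 \<Longrightarrow> m \<ge> Nf e \<Longrightarrow> n \<ge> Nf e \<Longrightarrow>
      fnorm \<Omega> \<phi> a pm (\<lambda>x. U m x - U n x) < ennreal e"
    by metis
  define r where "r k = (\<Sum>j\<le>k. Nf ((1/2)^j)) + k" for k
  have r_ge: "r k \<ge> Nf ((1/2)^k)" "r k \<ge> k" for k
    unfolding r_def using member_le_sum[of k "{..k}" "\<lambda>j. Nf ((1/2)^j)"] by auto
  have r_suc: "r k \<le> r (Suc k)" for k unfolding r_def by simp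
  have r_mono: "k \<le> k' \<Longrightarrow> r k \<le> r k'" for k k' using lift_Suc_mono_le[of r, OF r_suc] by blast
  define V where "V k = U (r k)" for k
  have Vm: "V k \<in> borel_measurable (lebesgue_on \<Omega>)" for k unfolding V_def using Lm[OF U] .
  have Vsmall: "Lp_norm \<Omega> pm (\<lambda>x. V (Suc k) x - V k x) < ennreal ((1/2)^k)" for k
  proof -
    have "fnorm \<Omega> \<phi> a pm (\<lambda>x. V (Suc k) x - V k x) < ennreal ((1/2)^k)"
      unfolding V_def using r_ge[of k] r_suc[of k] by (intro Nf) auto
    then show ?thesis unfolding fn by (meson add_increasing order_refl le_less_trans zero_le)
  qed
  have AEc: "AE x in lebesgue_on \<Omega>. convergent (\<lambda>k. V k x)"
    by (rule lp_complete_limit[OF Ol pm Vm Vsmall])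
  define u where "u x = lim (\<lambda>k. V k x)" for x
  have um: "u \<in> borel_measurable (lebesgue_on \<Omega>)" unfolding u_def using Vm by measurable
  have conv: "AE x in lebesgue_on \<Omega>. (\<lambda>k. V k x) \<longlonglongrightarrow> u x"
    using AEc by eventually_elim (simp add: u_def convergent_LIMSEQ_iff)
  have key: "?LF (DD (\<lambda>x. U m x - u x)) \<le> ennreal e \<and> Lp_norm \<Omega> pm (\<lambda>x. U m x - u x) \<le> ennreal e"
    if e: "e > 0" and m: "m \<ge> Nf e" for e m
  proof -
    define W where "W k x = U m x - V k x" for k x
    have WL: "W k \<in> Lspace \<Omega> \<phi> a pm" for k unfolding W_def V_def using diffL[OF U U] .
    have Wm: "W k \<in> borel_measurable (lebesgue_on \<Omega>)" for k using Lm[OF WL] .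
    have ev: "fnorm \<Omega> \<phi> a pm (W k) < ennreal e" if "k \<ge> Nf e" for k
      unfolding W_def V_def using e m r_ge[of k] that by (intro Nf) auto
    have evF: "?LF (DD (W k)) < ennreal e" if "k \<ge> Nf e" for k
      using ev[OF that] unfolding fn by (meson add_increasing2 order_refl le_less_trans zero_le)
    have evP: "Lp_norm \<Omega> pm (W k) < ennreal e" if "k \<ge> Nf e" for k
      using ev[OF that] unfolding fn by (meson add_increasing order_refl le_less_trans zero_le)
    have wm: "(\<lambda>x. U m x - u x) \<in> borel_measurable (lebesgue_on \<Omega>)" using Lm[OF U] um by measurable
    have F: "?LF (DD (\<lambda>x. U m x - u x)) \<le> ennreal e"
    proof (rule lux_fatou[OF g e _ DD_nonneg])
      show "\<And>k z. 0 \<le> DD (W k) z" by (rule DD_nonneg)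
      show "AE z in lebesgue_on (\<Omega> \<times> \<Omega>). (\<lambda>k. DD (W k) z) \<longlonglongrightarrow> DD (\<lambda>x. U m x - u x) z"
        using AE_pair_lift[OF O conv]
      proof eventually_elim
        case (elim z)
        then show ?case unfolding DD_def W_def by (intro tendsto_intros) auto
      qed
      show "\<And>k. (\<lambda>z. psiF \<phi> a (DD (W k) z / e) z) \<in> borel_measurable (lebesgue_on (\<Omega> \<times> \<Omega>))"
        by (rule psiF_meas[OF O C1 pm ab Ll[OF WL] e])
      show "\<And>k. Nf e \<le> k \<Longrightarrow> ?LF (DD (W k)) < ennreal e" by (rule evF)
    qed
    have P: "Lp_norm \<Omega> pm (\<lambda>x. U m x - u x) \<le> ennreal e"
      unfolding Lp_norm_lux[OF Ol p0 wm]
    proof (rule lux_fatou[OF goodpsi_powr[OF pm] e])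
      show "\<And>k z. 0 \<le> cmod (W k z)" by simp
      show "\<And>z. 0 \<le> cmod (U m z - u z)" by simp
      show "AE z in lebesgue_on \<Omega>. (\<lambda>k. cmod (W k z)) \<longlonglongrightarrow> cmod (U m z - u z)"
        using conv by eventually_elim (unfold W_def, intro tendsto_intros)
      show "\<And>k. (\<lambda>z. (cmod (W k z) / e) powr pm) \<in> borel_measurable (lebesgue_on \<Omega>)"
        using Wm by measurable
      show "\<And>k. Nf e \<le> k \<Longrightarrow> Lux (lebesgue_on \<Omega>) (\<lambda>t z. t powr pm) (\<lambda>z. cmod (W k z)) < ennreal e"
        using evP unfolding Lp_norm_lux[OF Ol p0 Wm] by blast
    qed
    show ?thesis using F P by simp
  qed
  have bound: "fnorm \<Omega> \<phi> a pm (\<lambda>x. U m x - u x) \<le> ennreal (2 * e)" if "e > 0" "m \<ge> Nf e" for e m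
  proof -
    have "fnorm \<Omega> \<phi> a pm (\<lambda>x. U m x - u x) \<le> ennreal e + ennreal e"
      unfolding fn using key[OF that] by (intro add_mono) auto
    also have "\<dots> = ennreal (2 * e)" using that by (simp add: ennreal_plus[symmetric] del: ennreal_plus)
    finally show ?thesis .
  qed
  define m0 where "m0 = Nf 1"
  define w0 where "w0 x = U m0 x - u x" for x
  have w0L: "w0 \<in> Lspace \<Omega> \<phi> a pm"
  proof -
    have w0m: "w0 \<in> borel_measurable (lebesgue_on \<Omega>)" unfolding w0_def using Lm[OF U] um by measurable
    have kk: "?LF (DD w0) \<le> ennreal 1" "Lp_norm \<Omega> pm w0 \<le> ennreal 1"
      using key[of 1 m0] unfolding w0_def m0_def by auto
    then have "Lp_norm \<Omega> pm w0 < top" by (simp add: le_less_trans)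
    then have "Lp_integral \<Omega> pm w0 < top" unfolding Lp_norm_top_iff .
    then have "w0 \<in> Lp_loc_space \<Omega> pm" by (rule Lp_loc_global[OF Ol w0m])
    moreover have "fnorm \<Omega> \<phi> a pm w0 < top" unfolding fn using kk
      by (metis add_mono ennreal_add_less_top ennreal_less_top le_less_trans)
    ultimately show ?thesis unfolding Lspace_def by simp
  qed
  have "(\<lambda>x. U m0 x + (-1) * w0 x) \<in> Lspace \<Omega> \<phi> a pm" by (rule add[OF U scl[OF w0L]])
  moreover have "(\<lambda>x. U m0 x + (-1) * w0 x) = u" unfolding w0_def by auto
  ultimately have uL: "u \<in> Lspace \<Omega> \<phi> a pm" by simp
  have lim: "(\<lambda>n. fnorm \<Omega> \<phi> a pm (\<lambda>x. U n x - u x)) \<longlonglongrightarrow> 0"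
  proof (rule order_tendstoI)
    fix y :: ennreal assume "y < 0" then show "\<forall>\<^sub>F n in sequentially. y < fnorm \<Omega> \<phi> a pm (\<lambda>x. U n x - u x)"
      by simp
  next
    fix y :: ennreal assume y: "0 < y"
    obtain e where e: "e > 0" "ennreal (2 * e) < y"
    proof (cases "y = top")
      case True then show ?thesis using that[of 1] by simp
    next
      case False
      then obtain r where r: "y = ennreal r" "r > 0" using y by (cases y) auto
      then show ?thesis using that[of "r/4"] by (simp add: ennreal_less_iff)
    qed
    show "\<forall>\<^sub>F n in sequentially. fnorm \<Omega> \<phi> a pm (\<lambda>x. U n x - u x) < y"
      unfolding eventually_sequentially using bound[OF e(1)] e(2) by (meson le_less_trans)
  qed
  show ?thesis using uL lim by blast
qed

theorem theorem2p1:
  fixes \<Omega> :: "'a::euclidean_space set"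
    and \<phi> :: "real \<Rightarrow> 'a \<Rightarrow> 'a \<Rightarrow> real"
    and a :: "'a \<Rightarrow> real"
    and r c0 pm pp \<beta> c1 :: real
  assumes "open \<Omega>"
    and a_L1: "integrable lborel a"
    and a_nonneg: "AE z in lborel. a z \<ge> 0"
    and "r > 0" and "c0 > 0"
    and a_ball: "AE z in lborel. z \<in> ball 0 r \<longrightarrow> a z \<ge> c0"
    and components: "\<not> connected \<Omega> \<Longrightarrow>
       \<exists>(C :: nat \<Rightarrow> 'a set) (N :: enat). inj_on C {i. enat i < N} \<and>
          components \<Omega> = C ` {i. enat i < N} \<and>
          (\<forall>i. enat (Suc i) < N \<longrightarrow> setdist (C i) (C (Suc i)) < diameter (ball (0::'a) r))"
    and phi_nonneg: "\<forall>t\<ge>0. \<forall>x\<in>\<Omega>. \<forall>y\<in>\<Omega>. \<phi> t x y \<ge> 0"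
    and C1: "cond_C1 \<Omega> \<phi>"
    and C2: "cond_C2 \<Omega> \<phi>"
    and C3: "cond_C3 \<Omega> \<phi> pm pp \<beta>"
    and C4: "cond_C4 \<Omega> \<phi> c1"
  shows
    \<comment> \<open>L(Omega) is a complex vector space\<close>
    "(\<lambda>x. 0) \<in> Lspace \<Omega> \<phi> a pm
     \<and> (\<forall>u\<in>Lspace \<Omega> \<phi> a pm. \<forall>v\<in>Lspace \<Omega> \<phi> a pm. (\<lambda>x. u x + v x) \<in> Lspace \<Omega> \<phi> a pm)
     \<and> (\<forall>u\<in>Lspace \<Omega> \<phi> a pm. \<forall>c::complex. (\<lambda>x. c * u x) \<in> Lspace \<Omega> \<phi> a pm)
     \<comment> \<open>f is a norm on L(Omega) (functions identified a.e. on Omega)\<close>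
     \<and> (\<forall>u\<in>Lspace \<Omega> \<phi> a pm. \<forall>v\<in>Lspace \<Omega> \<phi> a pm. (AE x in lebesgue_on \<Omega>. u x = v x) \<longrightarrow>
          fnorm \<Omega> \<phi> a pm u = fnorm \<Omega> \<phi> a pm v)
     \<and> (\<forall>u\<in>Lspace \<Omega> \<phi> a pm. fnorm \<Omega> \<phi> a pm u = 0 \<longleftrightarrow> (AE x in lebesgue_on \<Omega>. u x = 0))
     \<and> (\<forall>u\<in>Lspace \<Omega> \<phi> a pm. \<forall>c::complex.
          fnorm \<Omega> \<phi> a pm (\<lambda>x. c * u x) = ennreal (cmod c) * fnorm \<Omega> \<phi> a pm u)
     \<and> (\<forall>u\<in>Lspace \<Omega> \<phi> a pm. \<forall>v\<in>Lspace \<Omega> \<phi> a pm.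
          fnorm \<Omega> \<phi> a pm (\<lambda>x. u x + v x) \<le> fnorm \<Omega> \<phi> a pm u + fnorm \<Omega> \<phi> a pm v)
     \<comment> \<open>completeness (Banach space)\<close>
     \<and> (\<forall>U :: nat \<Rightarrow> 'a \<Rightarrow> complex. (\<forall>n. U n \<in> Lspace \<Omega> \<phi> a pm) \<and>
          (\<forall>e>0. \<exists>N. \<forall>m\<ge>N. \<forall>n\<ge>N. fnorm \<Omega> \<phi> a pm (\<lambda>x. U m x - U n x) < ennreal e) \<longrightarrow>
          (\<exists>u\<in>Lspace \<Omega> \<phi> a pm. (\<lambda>n. fnorm \<Omega> \<phi> a pm (\<lambda>x. U n x - u x)) \<longlonglongrightarrow> 0))
     \<comment> \<open>continuous embedding of L_{p+} \<inter> L_{p-} into L(Omega)\<close>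
     \<and> (\<exists>C::real. C > 0 \<and> (\<forall>u \<in> Lp_space \<Omega> pp \<inter> Lp_space \<Omega> pm.
          u \<in> Lspace \<Omega> \<phi> a pm \<and>
          fnorm \<Omega> \<phi> a pm u \<le> ennreal C * (Lp_norm \<Omega> pp u + Lp_norm \<Omega> pm u)))
     \<comment> \<open>continuous embedding of L(Omega) into L_{p-}\<close>
     \<and> (\<exists>C::real. C > 0 \<and> (\<forall>u \<in> Lspace \<Omega> \<phi> a pm.
          u \<in> Lp_space \<Omega> pm \<and> Lp_norm \<Omega> pm u \<le> ennreal C * fnorm \<Omega> \<phi> a pm u))"
proof -
  note O = \<open>open \<Omega>\<close>
  have Ol: "\<Omega> \<in> sets lebesgue" using O by simp
  have b: "pm > 1" "pp \<ge> pm" "\<beta> \<ge> 1" "c1 > 0" using C3 C4 unfolding cond_C3_def cond_C4_def by auto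
  have pm: "pm \<ge> 1" and p0: "pm > 0" and pp: "pp \<ge> 1" using b by auto
  have ab: "a \<in> borel_measurable borel" using borel_measurable_integrable[OF a_L1] by simp
  have g: "goodpsi (lebesgue_on (\<Omega>\<times>\<Omega>)) (psiF \<phi> a)" by (rule goodpsiF[OF O phi_nonneg C2 C3 C4])
  let ?L = "Lspace \<Omega> \<phi> a pm"
  let ?LF = "Lux (lebesgue_on (\<Omega>\<times>\<Omega>)) (psiF \<phi> a)"
  have fn: "fnorm \<Omega> \<phi> a pm w = ?LF (DD w) + Lp_norm \<Omega> pm w" for w
    unfolding fnorm_def seminorm_eq[OF O phi_nonneg] ..
  have Lm: "w \<in> borel_measurable (lebesgue_on \<Omega>)" if "w \<in> ?L" for w
    using that unfolding Lspace_def Lp_loc_space_def by auto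
  have Ll: "w \<in> Lp_loc_space \<Omega> pm" if "w \<in> ?L" for w
    using that unfolding Lspace_def by auto
  have Lf: "fnorm \<Omega> \<phi> a pm w < top" if "w \<in> ?L" for w
    using that unfolding Lspace_def by auto
  have tri: "fnorm \<Omega> \<phi> a pm (\<lambda>x. u x + v x) \<le> fnorm \<Omega> \<phi> a pm u + fnorm \<Omega> \<phi> a pm v"
    if u: "u \<in> ?L" and v: "v \<in> ?L" for u v
  proof -
    have "fnorm \<Omega> \<phi> a pm (\<lambda>x. u x + v x) \<le> (?LF (DD u) + ?LF (DD v)) + (Lp_norm \<Omega> pm u + Lp_norm \<Omega> pm v)"
      unfolding fn by (intro add_mono sn_tri[OF O g C1 pm ab Ll[OF u] Ll[OF v]] Lp_tri[OF Ol pm Lm[OF u] Lm[OF v]])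
    also have "\<dots> = fnorm \<Omega> \<phi> a pm u + fnorm \<Omega> \<phi> a pm v" unfolding fn by (simp add: ac_simps)
    finally show ?thesis .
  qed
  have sc: "fnorm \<Omega> \<phi> a pm (\<lambda>x. c * u x) = ennreal (cmod c) * fnorm \<Omega> \<phi> a pm u"
    if u: "u \<in> ?L" for u c
    unfolding fn sn_scale[OF g] Lp_scale[OF Ol pm Lm[OF u]] by (simp add: distrib_left)
  have addL: "(\<lambda>x. u x + v x) \<in> ?L" if u: "u \<in> ?L" and v: "v \<in> ?L" for u v
  proof -
    have "fnorm \<Omega> \<phi> a pm (\<lambda>x. u x + v x) < top"
      using tri[OF u v] Lf[OF u] Lf[OF v] by (simp add: le_less_trans)
    then show ?thesis using Lp_loc_add[OF Ol pm Ll[OF u] Ll[OF v]] unfolding Lspace_def by simp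
  qed
  have sclL: "(\<lambda>x. c * u x) \<in> ?L" if u: "u \<in> ?L" for u c
  proof -
    have "fnorm \<Omega> \<phi> a pm (\<lambda>x. c * u x) < top"
      using sc[OF u, of c] Lf[OF u] by (simp add: ennreal_mult_less_top)
    then show ?thesis using Lp_loc_scale[OF Ol pm Ll[OF u]] unfolding Lspace_def by simp
  qed
  have zeroL: "(\<lambda>x. 0) \<in> ?L"
  proof -
    have zm: "(\<lambda>x. 0::complex) \<in> borel_measurable (lebesgue_on \<Omega>)" by simp
    have "(\<lambda>x. 0::complex) \<in> Lp_loc_space \<Omega> pm"
      unfolding Lp_loc_space_def Lp_integral_def using p0 by simp
    moreover have "fnorm \<Omega> \<phi> a pm (\<lambda>x. 0) = 0"
      unfolding fn using sn_zero[OF O g, of "\<lambda>x. 0"] Lp_zero_iff[OF Ol pm p0 zm] by simp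
    ultimately show ?thesis unfolding Lspace_def by simp
  qed
  have cong: "fnorm \<Omega> \<phi> a pm u = fnorm \<Omega> \<phi> a pm v"
    if u: "u \<in> ?L" and v: "v \<in> ?L" and e: "AE x in lebesgue_on \<Omega>. u x = v x" for u v
    unfolding fn sn_cong[OF O e] Lp_cong[OF Ol pm p0 Lm[OF u] Lm[OF v] e] ..
  have zeroiff: "fnorm \<Omega> \<phi> a pm u = 0 \<longleftrightarrow> (AE x in lebesgue_on \<Omega>. u x = 0)" if u: "u \<in> ?L" for u
  proof
    assume "fnorm \<Omega> \<phi> a pm u = 0"
    then have "Lp_norm \<Omega> pm u = 0" unfolding fn by simp
    then show "AE x in lebesgue_on \<Omega>. u x = 0" using Lp_zero_iff[OF Ol pm p0 Lm[OF u]] by simp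
  next
    assume e: "AE x in lebesgue_on \<Omega>. u x = 0"
    show "fnorm \<Omega> \<phi> a pm u = 0"
      unfolding fn using sn_zero[OF O g e] Lp_zero_iff[OF Ol pm p0 Lm[OF u]] e by simp
  qed
  have complete: "\<exists>u\<in>?L. (\<lambda>n. fnorm \<Omega> \<phi> a pm (\<lambda>x. U n x - u x)) \<longlonglongrightarrow> 0"
    if "(\<forall>n. U n \<in> ?L) \<and> (\<forall>e>0. \<exists>N. \<forall>m\<ge>N. \<forall>n\<ge>N. fnorm \<Omega> \<phi> a pm (\<lambda>x. U m x - U n x) < ennreal e)"
    for U :: "nat \<Rightarrow> 'a \<Rightarrow> complex"
    using that by (intro completeness[OF O phi_nonneg g C1 pm ab addL sclL]) auto
  obtain Ar where Ar: "(\<integral>\<^sup>+y. ennreal (a y) \<partial>lborel) = ennreal Ar" "Ar \<ge> 0"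
  proof -
    have "(\<integral>\<^sup>+y. ennreal (a y) \<partial>lborel) \<le> (\<integral>\<^sup>+y. ennreal (norm (a y)) \<partial>lborel)"
      by (intro nn_integral_mono ennreal_leI) simp
    also have "\<dots> < \<infinity>" using a_L1 unfolding integrable_iff_bounded by simp
    finally have "(\<integral>\<^sup>+y. ennreal (a y) \<partial>lborel) \<noteq> top" by simp
    then show ?thesis using that by (cases "(\<integral>\<^sup>+y. ennreal (a y) \<partial>lborel)") auto
  qed
  define K0 where "K0 = max 1 (\<beta> * c1 * (2 * (2 powr pp * 2 * Ar)))"
  have K0: "K0 \<ge> 1" "\<beta> * c1 * (2 * (2 powr pp * 2 * Ar)) \<le> K0" unfolding K0_def by auto
  have embed1: "\<exists>C::real. C > 0 \<and> (\<forall>u \<in> Lp_space \<Omega> pp \<inter> Lp_space \<Omega> pm.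
          u \<in> ?L \<and> fnorm \<Omega> \<phi> a pm u \<le> ennreal C * (Lp_norm \<Omega> pp u + Lp_norm \<Omega> pm u))"
  proof (intro exI[of _ "K0 + 1"] conjI ballI)
    show "K0 + 1 > 0" using K0 by simp
    fix u assume "u \<in> Lp_space \<Omega> pp \<inter> Lp_space \<Omega> pm"
    then have um: "u \<in> borel_measurable (lebesgue_on \<Omega>)" and f1: "Lp_norm \<Omega> pp u < top"
      and f2: "Lp_norm \<Omega> pm u < top" unfolding Lp_space_def by auto
    obtain A where A: "Lp_norm \<Omega> pp u = ennreal A" "A \<ge> 0" using f1 by (cases "Lp_norm \<Omega> pp u") auto
    obtain B where B: "Lp_norm \<Omega> pm u = ennreal B" "B \<ge> 0" using f2 by (cases "Lp_norm \<Omega> pm u") auto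
    have sb: "seminorm_p \<Omega> \<phi> a u \<le> ennreal (K0 * (A + B))"
      by (rule embed_bound[OF O phi_nonneg C3 C4 ab Ar K0 um A B])
    have "fnorm \<Omega> \<phi> a pm u \<le> ennreal (K0 * (A + B)) + ennreal B"
      unfolding fnorm_def B(1) using sb by (rule add_right_mono)
    also have "\<dots> = ennreal (K0 * (A + B) + B)" using K0 A B by (simp add: ennreal_plus)
    also have "\<dots> \<le> ennreal ((K0 + 1) * (A + B))" using A B by (intro ennreal_leI) (simp add: algebra_simps)
    also have "\<dots> = ennreal (K0 + 1) * (Lp_norm \<Omega> pp u + Lp_norm \<Omega> pm u)"
      unfolding A(1) B(1) using A B K0 by (simp add: ennreal_mult[symmetric] ennreal_plus[symmetric] del: ennreal_plus)
    finally have fb: "fnorm \<Omega> \<phi> a pm u \<le> ennreal (K0 + 1) * (Lp_norm \<Omega> pp u + Lp_norm \<Omega> pm u)" .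
    have "u \<in> Lp_loc_space \<Omega> pm" using f2 unfolding Lp_norm_top_iff by (rule Lp_loc_global[OF Ol um])
    moreover have "fnorm \<Omega> \<phi> a pm u < top"
      using fb A B by (simp add: le_less_trans ennreal_mult_less_top)
    ultimately show "u \<in> ?L" unfolding Lspace_def by simp
    show "fnorm \<Omega> \<phi> a pm u \<le> ennreal (K0 + 1) * (Lp_norm \<Omega> pp u + Lp_norm \<Omega> pm u)" by (rule fb)
  qed
  have embed2: "\<exists>C::real. C > 0 \<and> (\<forall>u \<in> ?L. u \<in> Lp_space \<Omega> pm \<and> Lp_norm \<Omega> pm u \<le> ennreal C * fnorm \<Omega> \<phi> a pm u)"
  proof (intro exI[of _ 1] conjI ballI)
    fix u assume u: "u \<in> ?L"
    have le: "Lp_norm \<Omega> pm u \<le> fnorm \<Omega> \<phi> a pm u" unfolding fn by (simp add: add_increasing)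
    then show "u \<in> Lp_space \<Omega> pm" unfolding Lp_space_def using Lm[OF u] Lf[OF u] by (simp add: le_less_trans)
    show "Lp_norm \<Omega> pm u \<le> ennreal 1 * fnorm \<Omega> \<phi> a pm u" using le by simp
  qed simp
  show ?thesis
    apply (intro conjI)
    subgoal by (rule zeroL)
    subgoal using addL by blast
    subgoal using sclL by blast
    subgoal using cong by blast
    subgoal using zeroiff by blast
    subgoal using sc by blast
    subgoal using tri by blast
    subgoal using complete by blast
    subgoal by (rule embed1)
    subgoal by (rule embed2)
    done
qed

end
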